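(* For $i=1,2$ let $C_i=C_{i+}\oplus C_{i-}$ with $C_{i\pm}=\mathbb{Z}_D^n$, let $P_i=\begin{bmatrix}I_n&0\\0&-I_n\end{bmatrix}$, and let $\delta_i$ be boundary operators on $C_i$ compatible with $P_i$. Let $C=C_1\otimes C_2$, $\partial=\delta_1\otimes I+P_1\otimes\delta_2$, and $C_+=C_{1+}\otimes C_{2+}\oplus C_{1-}\otimes C_{2-}\le C$. Fix $n'\le n$ and suppose that the distance of each of the codes $\mathrm{CSS}(C_i,\delta_i,P_i)$ and $\mathrm{CSS}(C_i,\delta_i,-P_i)$ is at least $2(n-n')+1$ ($i=1,2$). If $h\in C_+\cap\ker\partial$ has vanishing reduced matrix, then $h\in\operatorname{im}\partial$. Likewise, if $h\in C_+\cap\ker\partial^T$ has vanishing reduced matrix, then $h\in\operatorname{im}\partial^T$.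
   Context: $D$ is an odd prime, $\mathbb{Z}_D$ the field with $D$ elements; transposes are with respect to the standard (product) bases. A boundary operator compatible with $P$ on $C_+\oplus C_-$ is a linear map $\delta$ with $\delta^2=0$, $\delta P+P\delta=0$, i.e. $\delta=\begin{bmatrix}0&\delta_{+-}\\ \delta_{-+}&0\end{bmatrix}$ with $\delta_{+-}:C_-\to C_+$, $\delta_{-+}:C_+\to C_-$. The code $\mathrm{CSS}(C,\delta,P)$ is the qudit CSS code over $\mathbb{Z}_D$ whose physical qudits correspond to the standard basis vectors of $C_+$, whose $Z$-type stabilizer generators are the columns of $\delta_{+-}$ and whose $X$-type stabilizer generators are the rows of $\delta_{-+}$; its distance is the minimum weight (number of nonzero coordinates) of a vector in $(\ker\delta_{-+}\setminus\operatorname{im}\delta_{+-})\cup(\ker\delta_{+-}^T\setminus\operatorname{im}\delta_{-+}^T)$. $\mathrm{CSS}(C,\delta,-P)$ is the same construction with the roles of $C_+$ and $C_-$ (and of $\delta_{+-}$, $\delta_{-+}$) exchanged. An element $\psi\in C_+$ is viewed as a pair of $n\times n$ matrices $\psi_+\in C_{1+}\otimes C_{2+}$, $\psi_-\in C_{1-}\otimes C_{2-}$; its reduced matrix is the pair of $n'\times n'$ submatrices of $\psi_+$ and $\psi_-$ formed by their first $n'$ rows and first $n'$ columns. *)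

theory Defs
  imports "Jordan_Normal_Form.Matrix" "HOL-Library.Extended_Nat" "HOL-Computational_Algebra.Primes"
begin

text \<open>Kronecker (tensor) product of matrices w.r.t. the standard product basis:
  basis vector e_i (x) f_j has index i * dim2 + j.\<close>
definition kron_mat :: "'a::semiring_0 mat \<Rightarrow> 'a mat \<Rightarrow> 'a mat" where
  "kron_mat A B = mat (dim_row A * dim_row B) (dim_col A * dim_col B)
     (\<lambda>(i,j). A $$ (i div dim_row B, j div dim_col B) * B $$ (i mod dim_row B, j mod dim_col B))"

definition grading :: "nat \<Rightarrow> 'a::ring_1 mat" where
  "grading n = four_block_mat (1\<^sub>m n) (0\<^sub>m n n) (0\<^sub>m n n) (- 1\<^sub>m n)"

definition compatible_boundary :: "nat \<Rightarrow> 'a::ring_1 mat \<Rightarrow> bool" where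
  "compatible_boundary n \<delta> \<longleftrightarrow> \<delta> \<in> carrier_mat (2*n) (2*n) \<and>
     \<delta> * \<delta> = 0\<^sub>m (2*n) (2*n) \<and> \<delta> * grading n + grading n * \<delta> = 0\<^sub>m (2*n) (2*n)"

definition delta_pm :: "nat \<Rightarrow> 'a mat \<Rightarrow> 'a mat" where
  "delta_pm n \<delta> = mat n n (\<lambda>(i,j). \<delta> $$ (i, n + j))"
definition delta_mp :: "nat \<Rightarrow> 'a mat \<Rightarrow> 'a mat" where
  "delta_mp n \<delta> = mat n n (\<lambda>(i,j). \<delta> $$ (n + i, j))"

definition mat_image :: "'a::semiring_0 mat \<Rightarrow> 'a vec set" where
  "mat_image M = {M *\<^sub>v x | x. x \<in> carrier_vec (dim_col M)}"

definition mat_kernel :: "'a::semiring_0 mat \<Rightarrow> 'a vec set" where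
  "mat_kernel M = {v \<in> carrier_vec (dim_col M). M *\<^sub>v v = 0\<^sub>v (dim_row M)}"

definition hweight :: "'a::zero vec \<Rightarrow> nat" where
  "hweight v = card {i. i < dim_vec v \<and> v $ i \<noteq> 0}"

text \<open>Distance of the CSS code with Z-stabilizers the columns of Hz (C_- -> C_+)
  and X-stabilizers the rows of Hx (C_+ -> C_-): minimum weight of a vector in
  (ker Hx - im Hz) \<union> (ker Hz^T - im Hx^T); infinity if there is none.\<close>
definition css_distance :: "'a::semiring_0 mat \<Rightarrow> 'a mat \<Rightarrow> enat" where
  "css_distance Hz Hx = (INF v \<in> (mat_kernel Hx - mat_image Hz) \<union>
        (mat_kernel (transpose_mat Hz) - mat_image (transpose_mat Hx)). enat (hweight v))"

definition css_dist_P :: "nat \<Rightarrow> 'a::semiring_0 mat \<Rightarrow> enat" where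
  "css_dist_P n \<delta> = css_distance (delta_pm n \<delta>) (delta_mp n \<delta>)"
definition css_dist_negP :: "nat \<Rightarrow> 'a::semiring_0 mat \<Rightarrow> enat" where
  "css_dist_negP n \<delta> = css_distance (delta_mp n \<delta>) (delta_pm n \<delta>)"

definition prod_boundary :: "nat \<Rightarrow> 'a::ring_1 mat \<Rightarrow> 'a mat \<Rightarrow> 'a mat" where
  "prod_boundary n \<delta>1 \<delta>2 = kron_mat \<delta>1 (1\<^sub>m (2*n)) + kron_mat (grading n) \<delta>2"

text \<open>An element h of C (index a * (2n) + b, a index of C_1, b of C_2) lies in
  C_+ = C_{1+}(x)C_{2+} (+) C_{1-}(x)C_{2-}.\<close>
definition in_Cplus :: "nat \<Rightarrow> 'a::zero vec \<Rightarrow> bool" where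
  "in_Cplus n h \<longleftrightarrow> h \<in> carrier_vec ((2*n) * (2*n)) \<and>
     (\<forall>a < 2*n. \<forall>b < 2*n. (a < n) \<noteq> (b < n) \<longrightarrow> h $ (a * (2*n) + b) = 0)"

definition psi_plus :: "nat \<Rightarrow> 'a vec \<Rightarrow> nat \<Rightarrow> nat \<Rightarrow> 'a" where
  "psi_plus n h j k = h $ (j * (2*n) + k)"
definition psi_minus :: "nat \<Rightarrow> 'a vec \<Rightarrow> nat \<Rightarrow> nat \<Rightarrow> 'a" where
  "psi_minus n h j k = h $ ((n + j) * (2*n) + (n + k))"

definition reduced_vanishes :: "nat \<Rightarrow> nat \<Rightarrow> 'a::zero vec \<Rightarrow> bool" where
  "reduced_vanishes n n' h \<longleftrightarrow>
     (\<forall>j < n'. \<forall>k < n'. psi_plus n h j k = 0 \<and> psi_minus n h j k = 0)"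

end

theory Submission
  imports Defs
begin
lemma invol_even:
  assumes inv: "\<And>x. f (f x) = x" and nf: "\<And>x. f x \<noteq> x"
  shows "finite S \<Longrightarrow> f ` S \<subseteq> S \<Longrightarrow> even (card S)"
proof (induction "card S" arbitrary: S rule: less_induct)
  case less
  show ?case
  proof (cases "S = {}")
    case True then show ?thesis by simp
  next
    case False
    then obtain x where x: "x \<in> S" by auto
    have fx: "f x \<in> S" using x less.prems by auto
    define S' where "S' = S - {x, f x}"
    have fin: "finite S'" using less.prems S'_def by auto
    have sub: "f ` S' \<subseteq> S'"
    proof
      fix z assume "z \<in> f ` S'"
      then obtain y where y: "y \<in> S'" "z = f y" by auto
      have "f y \<in> S" using y less.prems S'_def by auto
      moreover have "f y \<noteq> x" using y inv S'_def by (metis Diff_iff insertCI)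
      moreover have "f y \<noteq> f x" using y inv S'_def by (metis Diff_iff insertCI)
      ultimately show "z \<in> S'" using y S'_def by auto
    qed
    have cS: "card S = card S' + 2"
    proof -
      have "{x, f x} \<subseteq> S" using x fx by auto
      then have "card S' = card S - card {x, f x}" unfolding S'_def
        using less.prems(1) by (simp add: card_Diff_subset finite_subset)
      moreover have "card {x, f x} = 2" using nf[of x] by simp
      moreover have "card {x, f x} \<le> card S" using \<open>{x, f x} \<subseteq> S\<close> less.prems(1) card_mono by blast
      ultimately show ?thesis by simp
    qed
    have "even (card S')" using less.hyps[of S'] fin sub cS by simp
    then show ?thesis using cS by simp
  qed
qed

lemma two_nz:
  assumes "odd (card (UNIV :: 'a::{field,finite} set))"
  shows "(2::'a) \<noteq> 0"
proof
  assume h: "(2::'a) = 0"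
  have "even (card (UNIV :: 'a set))"
  proof (rule invol_even[of "\<lambda>x::'a. x + 1"])
    fix x :: 'a show "x + 1 + 1 = x" using h by (metis add.assoc add.right_neutral one_add_one)
  next
    fix x :: 'a show "x + 1 \<noteq> x" by simp
  qed auto
  then show False using assms by simp
qed


lemma sepF:
  fixes g :: "nat \<Rightarrow> nat \<Rightarrow> 'a::field"
  assumes "finite T"
  shows "(\<exists>c. \<forall>i<N. y i = (\<Sum>t\<in>T. c t * g t i)) \<or>
         (\<exists>\<phi>. (\<forall>t\<in>T. (\<Sum>i<N. \<phi> i * g t i) = 0) \<and> (\<Sum>i<N. \<phi> i * y i) = 1)"
  using assms
proof (induction T arbitrary: y rule: finite_induct)
  case empty
  show ?case
  proof (cases "\<forall>i<N. y i = 0")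
    case True then show ?thesis by simp
  next
    case False
    then obtain i0 where i0: "i0 < N" "y i0 \<noteq> 0" by auto
    define \<phi> where "\<phi> = (\<lambda>i. if i = i0 then inverse (y i0) else 0)"
    have "(\<Sum>i<N. \<phi> i * y i) = (\<Sum>i<N. if i = i0 then inverse (y i0) * y i0 else 0)"
      by (rule sum.cong) (auto simp: \<phi>_def)
    also have "\<dots> = 1" using i0 by simp
    finally show ?thesis by auto
  qed
next
  case (insert s T)
  from insert.IH[of "g s"] show ?case
  proof
    assume "\<exists>c. \<forall>i<N. g s i = (\<Sum>t\<in>T. c t * g t i)"
    then obtain c' where c': "\<forall>i<N. g s i = (\<Sum>t\<in>T. c' t * g t i)" by blast
    from insert.IH[of y] show ?thesis
    proof
      assume "\<exists>c. \<forall>i<N. y i = (\<Sum>t\<in>T. c t * g t i)"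
      then obtain c where c: "\<forall>i<N. y i = (\<Sum>t\<in>T. c t * g t i)" by blast
      have "\<forall>i<N. y i = (\<Sum>t\<in>insert s T. (c(s:=0)) t * g t i)"
      proof (intro allI impI)
        fix i assume "i < N"
        have "(\<Sum>t\<in>insert s T. (c(s:=0)) t * g t i) = (\<Sum>t\<in>T. (c(s:=0)) t * g t i)"
          using insert.hyps by simp
        also have "\<dots> = (\<Sum>t\<in>T. c t * g t i)"
          by (rule sum.cong) (use insert.hyps in auto)
        finally show "y i = (\<Sum>t\<in>insert s T. (c(s:=0)) t * g t i)" using c \<open>i<N\<close> by simp
      qed
      then show ?thesis by blast
    next
      assume "\<exists>\<phi>. (\<forall>t\<in>T. (\<Sum>i<N. \<phi> i * g t i) = 0) \<and> (\<Sum>i<N. \<phi> i * y i) = 1"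
      then obtain \<phi> where \<phi>: "\<forall>t\<in>T. (\<Sum>i<N. \<phi> i * g t i) = 0" "(\<Sum>i<N. \<phi> i * y i) = 1" by blast
      have "(\<Sum>i<N. \<phi> i * g s i) = (\<Sum>i<N. \<phi> i * (\<Sum>t\<in>T. c' t * g t i))"
        by (rule sum.cong) (use c' in auto)
      also have "\<dots> = (\<Sum>t\<in>T. c' t * (\<Sum>i<N. \<phi> i * g t i))"
        by (simp add: sum_distrib_left sum_distrib_right algebra_simps sum.swap[of _ T])
      also have "\<dots> = 0" using \<phi>(1) by simp
      finally show ?thesis using \<phi> by auto
    qed
  next
    assume "\<exists>\<psi>. (\<forall>t\<in>T. (\<Sum>i<N. \<psi> i * g t i) = 0) \<and> (\<Sum>i<N. \<psi> i * g s i) = 1"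
    then obtain \<psi> where \<psi>: "\<forall>t\<in>T. (\<Sum>i<N. \<psi> i * g t i) = 0" "(\<Sum>i<N. \<psi> i * g s i) = 1" by blast
    define \<alpha> where "\<alpha> = (\<Sum>i<N. \<psi> i * y i)"
    from insert.IH[of "\<lambda>i. y i - \<alpha> * g s i"] show ?thesis
    proof
      assume "\<exists>c. \<forall>i<N. y i - \<alpha> * g s i = (\<Sum>t\<in>T. c t * g t i)"
      then obtain c where c: "\<forall>i<N. y i - \<alpha> * g s i = (\<Sum>t\<in>T. c t * g t i)" by blast
      have "\<forall>i<N. y i = (\<Sum>t\<in>insert s T. (c(s:=\<alpha>)) t * g t i)"
      proof (intro allI impI)
        fix i assume "i < N"
        have "(\<Sum>t\<in>insert s T. (c(s:=\<alpha>)) t * g t i) = \<alpha> * g s i + (\<Sum>t\<in>T. (c(s:=\<alpha>)) t * g t i)"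
          using insert.hyps by simp
        also have "(\<Sum>t\<in>T. (c(s:=\<alpha>)) t * g t i) = (\<Sum>t\<in>T. c t * g t i)"
          by (rule sum.cong) (use insert.hyps in auto)
        finally show "y i = (\<Sum>t\<in>insert s T. (c(s:=\<alpha>)) t * g t i)" using c \<open>i<N\<close>
          by (metis add_diff_cancel_left' diff_add_cancel)
      qed
      then show ?thesis by blast
    next
      assume "\<exists>\<phi>. (\<forall>t\<in>T. (\<Sum>i<N. \<phi> i * g t i) = 0) \<and> (\<Sum>i<N. \<phi> i * (y i - \<alpha> * g s i)) = 1"
      then obtain \<phi> where \<phi>: "\<forall>t\<in>T. (\<Sum>i<N. \<phi> i * g t i) = 0"
          "(\<Sum>i<N. \<phi> i * (y i - \<alpha> * g s i)) = 1" by blast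
      define \<beta> where "\<beta> = (\<Sum>i<N. \<phi> i * g s i)"
      define \<chi> where "\<chi> = (\<lambda>i. \<phi> i - \<beta> * \<psi> i)"
      have lin: "(\<Sum>i<N. \<chi> i * v i) = (\<Sum>i<N. \<phi> i * v i) - \<beta> * (\<Sum>i<N. \<psi> i * v i)" for v
        by (simp add: \<chi>_def algebra_simps sum_subtractf sum_distrib_left)
      have "\<forall>t\<in>insert s T. (\<Sum>i<N. \<chi> i * g t i) = 0"
        using lin \<phi>(1) \<psi> \<beta>_def by auto
      moreover have "(\<Sum>i<N. \<chi> i * y i) = 1"
      proof -
        have "(\<Sum>i<N. \<phi> i * (y i - \<alpha> * g s i)) = (\<Sum>i<N. \<phi> i * y i) - \<alpha> * \<beta>"
          by (simp add: \<beta>_def algebra_simps sum_subtractf sum_distrib_left)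
        then have "(\<Sum>i<N. \<phi> i * y i) - \<alpha> * \<beta> = 1" using \<phi>(2) by simp
        then show ?thesis using lin[of y] \<alpha>_def by (simp add: algebra_simps)
      qed
      ultimately show ?thesis by blast
    qed
  qed
qed


definition mm :: "nat \<Rightarrow> (nat \<Rightarrow> nat \<Rightarrow> 'a::comm_ring_1) \<Rightarrow> (nat \<Rightarrow> nat \<Rightarrow> 'a) \<Rightarrow> nat \<Rightarrow> nat \<Rightarrow> 'a" where
  "mm N A B = (\<lambda>i j. \<Sum>k<N. A i k * B k j)"

lemma mm_assoc: "mm N (mm N A B) C = mm N A (mm N B C)"
  unfolding mm_def
  by (auto simp: fun_eq_iff sum_distrib_left sum_distrib_right mult.assoc intro: sum.swap)

lemma mm_lincomb: "finite T \<Longrightarrow> mm N A (\<lambda>b j. \<Sum>t\<in>T. c t * X b t) i j = (\<Sum>t\<in>T. c t * mm N A X i t)"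
  unfolding mm_def
  by (simp add: sum_distrib_left mult.left_commute sum.swap[of _ T])

lemma mm_upd_right: "mm N A (\<lambda>a b. B a b + u a * w b) i j = mm N A B i j + (\<Sum>a<N. A i a * u a) * w j"
  unfolding mm_def by (simp add: algebra_simps sum.distrib sum_distrib_right sum_distrib_left)

lemma mm_upd_left: "mm N (\<lambda>a b. B a b + u a * w b) C i j = mm N B C i j + u i * (\<Sum>b<N. w b * C b j)"
  unfolding mm_def by (simp add: algebra_simps sum.distrib sum_distrib_left)

lemma mm_cong_right: "(\<And>k. k < N \<Longrightarrow> B k j = B' k j') \<Longrightarrow> mm N A B i j = mm N A B' i j'"
  unfolding mm_def by (rule sum.cong) auto

lemma gen_inv:
  fixes \<delta> :: "nat \<Rightarrow> nat \<Rightarrow> 'a::field"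
  shows "\<exists>\<sigma>. \<forall>i<N. \<forall>j<N. mm N \<delta> (mm N \<sigma> \<delta>) i j = \<delta> i j"
proof -
  have "\<forall>k\<le>N. \<exists>\<sigma>. \<forall>i<N. \<forall>j<k. mm N \<delta> (mm N \<sigma> \<delta>) i j = \<delta> i j"
  proof (intro allI impI)
    fix k assume "k \<le> N"
    then show "\<exists>\<sigma>. \<forall>i<N. \<forall>j<k. mm N \<delta> (mm N \<sigma> \<delta>) i j = \<delta> i j"
    proof (induction k)
      case 0 then show ?case by simp
    next
      case (Suc k)
      then obtain \<sigma> where \<sigma>: "\<forall>i<N. \<forall>j<k. mm N \<delta> (mm N \<sigma> \<delta>) i j = \<delta> i j" by auto
      have kN: "k < N" using Suc by simp
      from sepF[of "{..<k}" N "\<lambda>i. \<delta> i k" "\<lambda>t i. \<delta> i t", OF finite_lessThan] show ?case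
      proof
        assume "\<exists>c. \<forall>i<N. \<delta> i k = (\<Sum>t\<in>{..<k}. c t * \<delta> i t)"
        then obtain c where c: "\<forall>i<N. \<delta> i k = (\<Sum>t<k. c t * \<delta> i t)" by auto
        have "mm N \<delta> (mm N \<sigma> \<delta>) i k = \<delta> i k" if i: "i < N" for i
        proof -
          have "mm N \<sigma> \<delta> a k = mm N \<sigma> (\<lambda>b j. \<Sum>t<k. c t * \<delta> b t) a k" for a
            by (rule mm_cong_right) (use c in auto)
          also have "\<dots> a = (\<Sum>t<k. c t * mm N \<sigma> \<delta> a t)" for a by (rule mm_lincomb) simp
          finally have "mm N \<delta> (mm N \<sigma> \<delta>) i k = mm N \<delta> (\<lambda>a j. \<Sum>t<k. c t * mm N \<sigma> \<delta> a t) i k"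
            by (intro mm_cong_right) auto
          also have "\<dots> = (\<Sum>t<k. c t * mm N \<delta> (mm N \<sigma> \<delta>) i t)" by (rule mm_lincomb) simp
          also have "\<dots> = (\<Sum>t<k. c t * \<delta> i t)" using \<sigma> i by auto
          finally show ?thesis using c i by simp
        qed
        then show ?thesis using \<sigma> less_Suc_eq by auto
      next
        assume "\<exists>\<phi>. (\<forall>t\<in>{..<k}. (\<Sum>i<N. \<phi> i * \<delta> i t) = 0) \<and> (\<Sum>i<N. \<phi> i * \<delta> i k) = 1"
        then obtain \<phi> where \<phi>: "\<forall>t<k. (\<Sum>i<N. \<phi> i * \<delta> i t) = 0" "(\<Sum>i<N. \<phi> i * \<delta> i k) = 1" by auto
        define v where "v = (\<lambda>a. (if a = k then 1 else 0) - mm N \<sigma> \<delta> a k)"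
        define \<sigma>' where "\<sigma>' = (\<lambda>a b. \<sigma> a b + v a * \<phi> b)"
        have e: "mm N \<delta> (mm N \<sigma>' \<delta>) i j = mm N \<delta> (mm N \<sigma> \<delta>) i j
                 + (\<Sum>a<N. \<delta> i a * v a) * (\<Sum>b<N. \<phi> b * \<delta> b j)" for i j
        proof -
          have "mm N \<sigma>' \<delta> = (\<lambda>a j. mm N \<sigma> \<delta> a j + v a * (\<Sum>b<N. \<phi> b * \<delta> b j))"
            unfolding \<sigma>'_def by (intro ext) (rule mm_upd_left)
          then show ?thesis by (simp add: mm_upd_right)
        qed
        have dv: "(\<Sum>a<N. \<delta> i a * v a) = \<delta> i k - mm N \<delta> (mm N \<sigma> \<delta>) i k" for i
        proof -
          have "(\<Sum>a<N. \<delta> i a * v a) = (\<Sum>a<N. (if a = k then \<delta> i a else 0)) - (\<Sum>a<N. \<delta> i a * mm N \<sigma> \<delta> a k)"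
            unfolding v_def by (simp add: right_diff_distrib sum_subtractf if_distrib[of "\<lambda>x. \<delta> i _ * x"] cong: if_cong)
          also have "\<dots> = \<delta> i k - mm N \<delta> (mm N \<sigma> \<delta>) i k" using kN by (simp add: mm_def)
          finally show ?thesis .
        qed
        have "\<forall>i<N. \<forall>j<Suc k. mm N \<delta> (mm N \<sigma>' \<delta>) i j = \<delta> i j"
        proof (intro allI impI)
          fix i j assume i: "i < N" and j: "j < Suc k"
          show "mm N \<delta> (mm N \<sigma>' \<delta>) i j = \<delta> i j"
          proof (cases "j < k")
            case True then show ?thesis using e \<sigma> \<phi> i by simp
          next
            case False then have "j = k" using j by simp
            then show ?thesis using e dv \<phi> by simp
          qed
        qed
        then show ?thesis by blast
      qed
    qed
  qed
  then show ?thesis by auto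
qed


lemma mm_diff_left: "mm N (\<lambda>a b. A a b - B a b) C i j = mm N A C i j - mm N B C i j"
  unfolding mm_def by (simp add: algebra_simps sum_subtractf)

lemma mm_id_left: "i < N \<Longrightarrow> mm N (\<lambda>a b. if a = b then 1 else 0) C i j = C i j"
proof -
  assume i: "i < N"
  have "mm N (\<lambda>a b. if a = b then 1 else 0) C i j = (\<Sum>k<N. if i = k then C k j else 0)"
    unfolding mm_def by (rule sum.cong) auto
  then show ?thesis using i by (simp add: sum.delta)
qed

lemma sum_ind: "t < (N::nat) \<Longrightarrow> (\<Sum>j<N. f j * (if j = t then 1 else 0)) = (f t :: 'a::comm_ring_1)"
proof -
  assume t: "t < N"
  have "(\<Sum>j<N. f j * (if j = t then 1 else 0)) = (\<Sum>j<N. if j = t then f j else 0)"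
    by (rule sum.cong) auto
  then show ?thesis using t by (simp add: sum.delta)
qed

lemma clean:
  fixes \<delta> :: "nat \<Rightarrow> nat \<Rightarrow> 'a::field"
  assumes sq: "\<forall>i<N. \<forall>j<N. mm N \<delta> \<delta> i j = 0"
  and hyp: "\<forall>v. (\<forall>i<N. (\<Sum>j<N. \<delta> i j * v j) = 0) \<longrightarrow> (\<forall>i<N. i \<notin> R \<longrightarrow> v i = 0)
              \<longrightarrow> (\<exists>w. \<forall>i<N. v i = (\<Sum>j<N. \<delta> i j * w j))"
  shows "\<exists>\<sigma>. \<forall>r<N. r \<in> R \<longrightarrow> (\<forall>i<N. mm N \<delta> \<sigma> i r + mm N \<sigma> \<delta> i r = (if i = r then 1 else 0))"
proof -
  define Pim where "Pim = (\<lambda>\<sigma> i j. (if i = j then 1 else 0) - mm N \<delta> \<sigma> i j - mm N \<sigma> \<delta> i j)"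
  have ddx: "mm N (mm N \<delta> \<delta>) X i j = 0" if "i < N" for X i j
    using sq that unfolding mm_def by simp
  have xdd: "mm N X (mm N \<delta> \<delta>) i j = 0" if "j < N" for X i j
    using sq that unfolding mm_def by simp
  have "\<forall>k\<le>N. \<exists>\<sigma>. (\<forall>i<N. \<forall>j<N. mm N \<delta> (mm N \<sigma> \<delta>) i j = \<delta> i j) \<and>
                 (\<forall>r<k. r \<in> R \<longrightarrow> (\<forall>i<N. Pim \<sigma> i r = 0))"
  proof (intro allI impI)
    fix k assume "k \<le> N"
    then show "\<exists>\<sigma>. (\<forall>i<N. \<forall>j<N. mm N \<delta> (mm N \<sigma> \<delta>) i j = \<delta> i j) \<and>
                 (\<forall>r<k. r \<in> R \<longrightarrow> (\<forall>i<N. Pim \<sigma> i r = 0))"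
    proof (induction k)
      case 0 then show ?case using gen_inv[of N \<delta>] by simp
    next
      case (Suc k)
      then obtain \<sigma> where GI: "\<forall>i<N. \<forall>j<N. mm N \<delta> (mm N \<sigma> \<delta>) i j = \<delta> i j"
        and P: "\<forall>r<k. r \<in> R \<longrightarrow> (\<forall>i<N. Pim \<sigma> i r = 0)" by auto
      have kN: "k < N" using Suc by simp
      show ?case
      proof (cases "k \<in> R")
        case False
        then show ?thesis using GI P less_Suc_eq by auto
      next
        case kR: True
        define T where "T = {t. t < k \<and> t \<in> R}"
        have finT: "finite T" unfolding T_def by simp
        have PimD: "mm N (Pim \<sigma>) \<delta> i j = 0" if "i < N" "j < N" for i j
        proof -
          have "mm N (Pim \<sigma>) \<delta> i j = \<delta> i j - mm N (mm N \<delta> \<sigma>) \<delta> i j - mm N (mm N \<sigma> \<delta>) \<delta> i j"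
            unfolding Pim_def by (simp add: mm_diff_left mm_id_left that)
          also have "\<dots> = 0" using GI xdd[of j \<sigma> i] that by (simp add: mm_assoc)
          finally show ?thesis .
        qed
        from sepF[of T N "\<lambda>i. \<delta> i k" "\<lambda>t i. \<delta> i t", OF finT] show ?thesis
        proof
          assume "\<exists>c. \<forall>i<N. \<delta> i k = (\<Sum>t\<in>T. c t * \<delta> i t)"
          then obtain c where c: "\<forall>i<N. \<delta> i k = (\<Sum>t\<in>T. c t * \<delta> i t)" by auto
          define z where "z = (\<lambda>x. (if x = k then 1 else 0) - (\<Sum>t\<in>T. c t * (if x = t then 1 else 0)))"
          have lz: "(\<Sum>x<N. A x * z x) = A k - (\<Sum>t\<in>T. c t * A t)" for A :: "nat \<Rightarrow> 'a"
          proof -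
            have "(\<Sum>x<N. A x * z x) = (\<Sum>x<N. A x * (if x = k then 1 else 0))
                 - (\<Sum>x<N. \<Sum>t\<in>T. c t * (A x * (if x = t then 1 else 0)))"
              unfolding z_def by (simp add: right_diff_distrib sum_subtractf sum_distrib_left mult.left_commute)
            also have "(\<Sum>x<N. \<Sum>t\<in>T. c t * (A x * (if x = t then 1 else 0))) = (\<Sum>t\<in>T. c t * A t)"
            proof -
              have "(\<Sum>x<N. \<Sum>t\<in>T. c t * (A x * (if x = t then 1 else 0)))
                    = (\<Sum>t\<in>T. c t * (\<Sum>x<N. A x * (if x = t then 1 else 0)))"
                by (simp add: sum.swap[of _ T] sum_distrib_left)
              also have "\<dots> = (\<Sum>t\<in>T. c t * A t)"
              proof (rule sum.cong)
                fix x assume "x \<in> T"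
                then have "x < N" using kN T_def by simp
                then show "c x * (\<Sum>xa<N. A xa * (if xa = x then 1 else 0)) = c x * A x"
                  using sum_ind[of x N A] by simp
              qed simp
              finally show ?thesis .
            qed
            finally show ?thesis using sum_ind[OF kN, of A] by simp
          qed
          have "\<forall>i<N. (\<Sum>j<N. \<delta> i j * z j) = 0" using lz c by simp
          moreover have "\<forall>i<N. i \<notin> R \<longrightarrow> z i = 0"
            using kR unfolding z_def T_def by (auto intro!: sum.neutral)
          ultimately obtain w where w: "\<forall>i<N. z i = (\<Sum>j<N. \<delta> i j * w j)" using hyp by blast
          have "Pim \<sigma> i k = 0" if i: "i < N" for i
          proof -
            have "(\<Sum>t\<in>T. c t * Pim \<sigma> i t) = 0"
              by (rule sum.neutral) (use P T_def i in auto)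
            then have "(\<Sum>x<N. Pim \<sigma> i x * z x) = Pim \<sigma> i k" using lz[of "Pim \<sigma> i"] by simp
            moreover have "(\<Sum>x<N. Pim \<sigma> i x * z x) = (\<Sum>x<N. Pim \<sigma> i x * (\<Sum>j<N. \<delta> x j * w j))"
              using w by simp
            moreover have "\<dots> = (\<Sum>j<N. mm N (Pim \<sigma>) \<delta> i j * w j)"
              unfolding mm_def by (simp add: sum_distrib_left sum_distrib_right mult.assoc) (rule sum.swap)
            moreover have "\<dots> = 0" using PimD i by simp
            ultimately show ?thesis by simp
          qed
          then have "\<forall>r<Suc k. r \<in> R \<longrightarrow> (\<forall>i<N. Pim \<sigma> i r = 0)"
            using P less_Suc_eq by auto
          then show ?thesis using GI by blast
        next
          assume "\<exists>\<phi>. (\<forall>t\<in>T. (\<Sum>i<N. \<phi> i * \<delta> i t) = 0) \<and> (\<Sum>i<N. \<phi> i * \<delta> i k) = 1"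
          then obtain \<phi> where \<phi>: "\<forall>t\<in>T. (\<Sum>i<N. \<phi> i * \<delta> i t) = 0" "(\<Sum>i<N. \<phi> i * \<delta> i k) = 1" by auto
          define u where "u = (\<lambda>a. Pim \<sigma> a k)"
          define \<sigma>' where "\<sigma>' = (\<lambda>a b. \<sigma> a b + u a * \<phi> b)"
          define \<psi> where "\<psi> = (\<lambda>j. \<Sum>b<N. \<phi> b * \<delta> b j)"
          have du: "(\<Sum>a<N. \<delta> i a * u a) = 0" if i: "i < N" for i
          proof -
            have "(\<Sum>a<N. \<delta> i a * u a) = mm N \<delta> (Pim \<sigma>) i k" unfolding u_def mm_def by simp
            also have "\<dots> = \<delta> i k - mm N \<delta> (mm N \<delta> \<sigma>) i k - mm N \<delta> (mm N \<sigma> \<delta>) i k"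
              unfolding Pim_def mm_def using kN
              by (simp add: right_diff_distrib sum_subtractf sum_ind)
            also have "\<dots> = 0" using GI i kN ddx[of i \<sigma> k] by (simp add: mm_assoc[symmetric])
            finally show ?thesis .
          qed
          have s1: "mm N \<delta> \<sigma>' i j = mm N \<delta> \<sigma> i j" if "i < N" for i j
            unfolding \<sigma>'_def using mm_upd_right[of N \<delta> \<sigma> u \<phi> i j] du that by simp
          have s2: "mm N \<sigma>' \<delta> = (\<lambda>a j. mm N \<sigma> \<delta> a j + u a * \<psi> j)"
            unfolding \<sigma>'_def \<psi>_def by (intro ext) (rule mm_upd_left)
          have GI': "\<forall>i<N. \<forall>j<N. mm N \<delta> (mm N \<sigma>' \<delta>) i j = \<delta> i j"
            using GI du by (simp add: s2 mm_upd_right)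
          have Pe: "Pim \<sigma>' i j = Pim \<sigma> i j - u i * \<psi> j" if "i < N" for i j
            unfolding Pim_def using s1[OF that] s2 by simp
          have "\<forall>r<Suc k. r \<in> R \<longrightarrow> (\<forall>i<N. Pim \<sigma>' i r = 0)"
          proof (intro allI impI)
            fix r i assume r: "r < Suc k" "r \<in> R" and i: "i < N"
            show "Pim \<sigma>' i r = 0"
            proof (cases "r < k")
              case True
              then have "r \<in> T" using r T_def by simp
              then show ?thesis using Pe[OF i] P True r \<phi>(1) \<psi>_def i by simp
            next
              case False then have "r = k" using r by simp
              then show ?thesis using Pe[OF i] \<phi>(2) \<psi>_def u_def by simp
            qed
          qed
          then show ?thesis using GI' by blast
        qed
      qed
    qed
  qed
  then obtain \<sigma> where "\<forall>r<N. r \<in> R \<longrightarrow> (\<forall>i<N. Pim \<sigma> i r = 0)" by auto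
  then show ?thesis unfolding Pim_def by (intro exI[of _ \<sigma>]) (auto simp: algebra_simps)
qed

lemma sum_split_add: "(\<Sum>j<(a::nat)+m. f j) = (\<Sum>j<a. f j) + (\<Sum>j<m. f (a+j))"
  by (induction m) (auto simp: add.assoc)

lemma sum_split2: "(\<Sum>j<2*(n::nat). f j) = (\<Sum>j<n. f j) + (\<Sum>j<n. f (n+j))"
  using sum_split_add[of f n n] by (simp add: mult_2)

lemma oddify:
  fixes \<delta> \<sigma> :: "nat \<Rightarrow> nat \<Rightarrow> 'a::field"
  assumes dodd: "\<forall>i<2*n. \<forall>j<2*n. (i<n) = (j<n) \<longrightarrow> \<delta> i j = 0"
  and M: "\<forall>r<2*n. r \<in> R \<longrightarrow> (\<forall>i<2*n. mm (2*n) \<delta> \<sigma> i r + mm (2*n) \<sigma> \<delta> i r = (if i = r then 1 else 0))"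
  shows "\<forall>r<2*n. r \<in> R \<longrightarrow> (\<forall>i<2*n. mm (2*n) \<delta> (\<lambda>a b. if (a<n) = (b<n) then 0 else \<sigma> a b) i r
            + mm (2*n) (\<lambda>a b. if (a<n) = (b<n) then 0 else \<sigma> a b) \<delta> i r = (if i = r then 1 else 0))"
proof (intro allI impI)
  fix r i assume r: "r < 2*n" "r \<in> R" and i: "i < 2*n"
  define \<sigma>o where "\<sigma>o = (\<lambda>a b. if (a<n) = (b<n) then 0 else \<sigma> a b)"
  show "mm (2*n) \<delta> \<sigma>o i r + mm (2*n) \<sigma>o \<delta> i r = (if i = r then 1 else 0)"
  proof (cases "(i<n) = (r<n)")
    case True
    have "mm (2*n) \<delta> \<sigma>o i r = mm (2*n) \<delta> \<sigma> i r"
      unfolding mm_def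
    proof (rule sum.cong)
      fix k assume "k \<in> {..<2*n}"
      then show "\<delta> i k * \<sigma>o k r = \<delta> i k * \<sigma> k r"
        using dodd i True unfolding \<sigma>o_def by auto
    qed simp
    moreover have "mm (2*n) \<sigma>o \<delta> i r = mm (2*n) \<sigma> \<delta> i r"
      unfolding mm_def
    proof (rule sum.cong)
      fix k assume "k \<in> {..<2*n}"
      then show "\<sigma>o i k * \<delta> k r = \<sigma> i k * \<delta> k r"
        using dodd r True unfolding \<sigma>o_def by auto
    qed simp
    ultimately show ?thesis using M r i by simp
  next
    case False
    have "mm (2*n) \<delta> \<sigma>o i r = 0"
      unfolding mm_def
    proof (rule sum.neutral, intro ballI)
      fix k assume "k \<in> {..<2*n}"
      then show "\<delta> i k * \<sigma>o k r = 0"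
        using dodd i False unfolding \<sigma>o_def by auto
    qed
    moreover have "mm (2*n) \<sigma>o \<delta> i r = 0"
      unfolding mm_def
    proof (rule sum.neutral, intro ballI)
      fix k assume "k \<in> {..<2*n}"
      then show "\<sigma>o i k * \<delta> k r = 0"
        using dodd r False unfolding \<sigma>o_def by auto
    qed
    moreover have "i \<noteq> r" using False by auto
    ultimately show ?thesis by simp
  qed
qed

definition Rs :: "nat \<Rightarrow> nat \<Rightarrow> nat set" where
  "Rs n n' = {i. (n' \<le> i \<and> i < n) \<or> n + n' \<le> i}"

lemma hyp_blocks:
  fixes d :: "nat \<Rightarrow> nat \<Rightarrow> 'a::field"
  assumes dodd: "\<forall>i<2*n. \<forall>j<2*n. (i<n) = (j<n) \<longrightarrow> d i j = 0"
  and HX: "\<forall>u. (\<forall>i<n. i<n' \<longrightarrow> u i = 0) \<longrightarrow> (\<forall>i<n. (\<Sum>j<n. d (n+i) j * u j) = 0)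
              \<longrightarrow> (\<exists>x. \<forall>i<n. u i = (\<Sum>j<n. d i (n+j) * x j))"
  and HY: "\<forall>u. (\<forall>i<n. i<n' \<longrightarrow> u i = 0) \<longrightarrow> (\<forall>i<n. (\<Sum>j<n. d i (n+j) * u j) = 0)
              \<longrightarrow> (\<exists>x. \<forall>i<n. u i = (\<Sum>j<n. d (n+i) j * x j))"
  shows "\<forall>v. (\<forall>i<2*n. (\<Sum>j<2*n. d i j * v j) = 0) \<longrightarrow> (\<forall>i<2*n. i \<notin> Rs n n' \<longrightarrow> v i = 0)
            \<longrightarrow> (\<exists>w. \<forall>i<2*n. v i = (\<Sum>j<2*n. d i j * w j))"
proof (intro allI impI)
  fix v assume dv: "\<forall>i<2*n. (\<Sum>j<2*n. d i j * v j) = 0" and sv: "\<forall>i<2*n. i \<notin> Rs n n' \<longrightarrow> v i = 0"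
  have z1: "(\<Sum>j<n. d i j * f j) = 0" if "i < n" for i f
    by (rule sum.neutral) (use dodd that in auto)
  have z2: "(\<Sum>j<n. d (n+i) (n+j) * f j) = 0" if "i < n" for i f
    by (rule sum.neutral) (use dodd that in auto)
  have a: "(\<Sum>j<n. d (n+i) j * v j) = 0" if "i < n" for i
    using dv[rule_format, of "n+i"] that z2[OF that, of "\<lambda>j. v (n+j)"] by (simp add: sum_split2)
  have b: "(\<Sum>j<n. d i (n+j) * v (n+j)) = 0" if "i < n" for i
    using dv[rule_format, of i] that z1[OF that, of v] by (simp add: sum_split2)
  have "\<forall>i<n. i<n' \<longrightarrow> v i = 0" using sv Rs_def by auto
  then obtain xp where xp: "\<forall>i<n. v i = (\<Sum>j<n. d i (n+j) * xp j)" using HX a by blast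
  have "\<forall>i<n. i<n' \<longrightarrow> v (n+i) = 0" using sv Rs_def by auto
  then obtain xm where xm: "\<forall>i<n. v (n+i) = (\<Sum>j<n. d (n+i) j * xm j)"
    using HY[rule_format, of "\<lambda>j. v (n+j)"] b by blast
  define w where "w = (\<lambda>j. if j < n then xm j else xp (j - n))"
  have "v i = (\<Sum>j<2*n. d i j * w j)" if i: "i < 2*n" for i
  proof (cases "i < n")
    case True
    have "(\<Sum>j<2*n. d i j * w j) = (\<Sum>j<n. d i j * xm j) + (\<Sum>j<n. d i (n+j) * xp j)"
      by (simp add: sum_split2 w_def)
    then show ?thesis using z1[OF True] xp True by simp
  next
    case False
    then obtain i' where i': "i = n + i'" "i' < n" using i by (metis add_diff_inverse_nat mult_2 nat_add_left_cancel_less)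
    have "(\<Sum>j<2*n. d i j * w j) = (\<Sum>j<n. d i j * xm j) + (\<Sum>j<n. d (n+i') (n+j) * xp j)"
      by (simp add: sum_split2 w_def i')
    then show ?thesis using z2[OF i'(2)] xm i' by simp
  qed
  then show "\<exists>w. \<forall>i<2*n. v i = (\<Sum>j<2*n. d i j * w j)" by blast
qed


definition pp :: "nat \<Rightarrow> nat \<Rightarrow> 'a::ring_1" where
  "pp n a = (if a < n then 1 else -1)"

definition Dop :: "nat \<Rightarrow> (nat \<Rightarrow> nat \<Rightarrow> 'a::ring_1) \<Rightarrow> (nat \<Rightarrow> nat \<Rightarrow> 'a) \<Rightarrow> (nat \<Rightarrow> nat \<Rightarrow> 'a) \<Rightarrow> nat \<Rightarrow> nat \<Rightarrow> 'a" where
  "Dop n d1 d2 F = (\<lambda>a b. (\<Sum>a'<2*n. d1 a a' * F a' b) + pp n a * (\<Sum>b'<2*n. d2 b b' * F a b'))"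

lemma pp_sq: "pp n a * pp n a = (1::'a::ring_1)"
  unfolding pp_def by simp

lemma odd_pp: "(\<forall>i<2*n. \<forall>j<2*n. (i<n) = (j<n) \<longrightarrow> d i j = 0) \<Longrightarrow> a < 2*n \<Longrightarrow> a' < 2*n
   \<Longrightarrow> d a a' * (pp n a' + pp n a) = (0::'a::ring_1)"
  unfolding pp_def by (cases "(a<n) = (a'<n)") auto

lemma sum_nest: "(\<Sum>x<N. A x * (\<Sum>y<N. B x y * C y)) = (\<Sum>y<(N::nat). (\<Sum>x<N. A x * B x y) * (C y :: 'a::comm_ring_1))"
proof -
  have "(\<Sum>x<N. A x * (\<Sum>y<N. B x y * C y)) = (\<Sum>x<N. \<Sum>y<N. A x * B x y * C y)"
    by (simp add: sum_distrib_left mult.assoc)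
  also have "\<dots> = (\<Sum>y<N. \<Sum>x<N. A x * B x y * C y)" by (rule sum.swap)
  also have "\<dots> = (\<Sum>y<N. (\<Sum>x<N. A x * B x y) * C y)" by (simp add: sum_distrib_right)
  finally show ?thesis .
qed

lemma sum_swap2: "(\<Sum>x<N. A x * (\<Sum>y<M. B y * G y x)) = (\<Sum>y<(M::nat). B y * (\<Sum>x<(N::nat). A x * (G y x :: 'a::comm_ring_1)))"
proof -
  have "(\<Sum>x<N. A x * (\<Sum>y<M. B y * G y x)) = (\<Sum>x<N. \<Sum>y<M. B y * (A x * G y x))"
    by (simp add: sum_distrib_left mult.left_commute)
  also have "\<dots> = (\<Sum>y<M. \<Sum>x<N. B y * (A x * G y x))" by (rule sum.swap)
  also have "\<dots> = (\<Sum>y<M. B y * (\<Sum>x<N. A x * G y x))" by (simp add: sum_distrib_left)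
  finally show ?thesis .
qed

lemma DD:
  fixes d1 d2 :: "nat \<Rightarrow> nat \<Rightarrow> 'a::field"
  assumes d1sq: "\<forall>i<2*n. \<forall>j<2*n. mm (2*n) d1 d1 i j = 0"
  and d2sq: "\<forall>i<2*n. \<forall>j<2*n. mm (2*n) d2 d2 i j = 0"
  and d1odd: "\<forall>i<2*n. \<forall>j<2*n. (i<n) = (j<n) \<longrightarrow> d1 i j = 0"
  and ab: "a < 2*n" "b < 2*n"
  shows "Dop n d1 d2 (Dop n d1 d2 F) a b = 0"
proof -
  let ?N = "2*n"
  define X where "X = (\<lambda>a'. \<Sum>b'<?N. d2 b b' * F a' b')"
  have T1: "(\<Sum>a'<?N. d1 a a' * (\<Sum>a''<?N. d1 a' a'' * F a'' b)) = 0"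
    unfolding sum_nest by (intro sum.neutral ballI) (use d1sq ab in \<open>simp add: mm_def\<close>)
  have T4: "(\<Sum>b'<?N. d2 b b' * (\<Sum>b''<?N. d2 b' b'' * F a b'')) = 0"
    unfolding sum_nest by (intro sum.neutral ballI) (use d2sq ab in \<open>simp add: mm_def\<close>)
  have T3: "(\<Sum>b'<?N. d2 b b' * (\<Sum>a'<?N. d1 a a' * F a' b')) = (\<Sum>a'<?N. d1 a a' * X a')"
    unfolding X_def by (rule sum_swap2)
  have T23: "(\<Sum>a'<?N. d1 a a' * (pp n a' * X a')) + pp n a * (\<Sum>a'<?N. d1 a a' * X a') = 0"
  proof -
    have "(\<Sum>a'<?N. d1 a a' * (pp n a' * X a')) + pp n a * (\<Sum>a'<?N. d1 a a' * X a')
        = (\<Sum>a'<?N. (d1 a a' * (pp n a' + pp n a)) * X a')"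
      by (simp add: sum_distrib_left sum.distrib[symmetric] algebra_simps)
    also have "\<dots> = 0" by (rule sum.neutral) (use odd_pp[OF d1odd ab(1)] in auto)
    finally show ?thesis .
  qed
  have "Dop n d1 d2 (Dop n d1 d2 F) a b =
        (\<Sum>a'<?N. d1 a a' * (\<Sum>a''<?N. d1 a' a'' * F a'' b))
      + (\<Sum>a'<?N. d1 a a' * (pp n a' * X a'))
      + pp n a * (\<Sum>b'<?N. d2 b b' * (\<Sum>a'<?N. d1 a a' * F a' b'))
      + (pp n a * pp n a) * (\<Sum>b'<?N. d2 b b' * (\<Sum>b''<?N. d2 b' b'' * F a b''))"
    unfolding Dop_def X_def
    by (simp add: distrib_left sum.distrib sum_distrib_left algebra_simps)
  also have "\<dots> = 0" using T1 T3 T4 T23 by (simp add: algebra_simps)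
  finally show ?thesis .
qed


lemma DS1:
  fixes d1 d2 s1 :: "nat \<Rightarrow> nat \<Rightarrow> 'a::field"
  assumes s1odd: "\<forall>i<2*n. \<forall>j<2*n. (i<n) = (j<n) \<longrightarrow> s1 i j = 0"
  and ab: "a < 2*n" "b < 2*n"
  shows "Dop n d1 d2 (\<lambda>a b. \<Sum>a'<2*n. s1 a a' * F a' b) a b
       + (\<Sum>a'<2*n. s1 a a' * Dop n d1 d2 F a' b)
       = (\<Sum>a'<2*n. (mm (2*n) d1 s1 a a' + mm (2*n) s1 d1 a a') * F a' b)"
proof -
  let ?N = "2*n"
  define X where "X = (\<lambda>a'. \<Sum>b'<?N. d2 b b' * F a' b')"
  have A: "(\<Sum>a'<?N. d1 a a' * (\<Sum>a''<?N. s1 a' a'' * F a'' b)) = (\<Sum>a'<?N. mm ?N d1 s1 a a' * F a' b)"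
    unfolding sum_nest mm_def ..
  have B: "(\<Sum>a'<?N. s1 a a' * (\<Sum>a''<?N. d1 a' a'' * F a'' b)) = (\<Sum>a'<?N. mm ?N s1 d1 a a' * F a' b)"
    unfolding sum_nest mm_def ..
  have C: "(\<Sum>b'<?N. d2 b b' * (\<Sum>a'<?N. s1 a a' * F a' b')) = (\<Sum>a'<?N. s1 a a' * X a')"
    unfolding X_def by (rule sum_swap2)
  have D: "pp n a * (\<Sum>a'<?N. s1 a a' * X a') + (\<Sum>a'<?N. s1 a a' * (pp n a' * X a')) = 0"
  proof -
    have "pp n a * (\<Sum>a'<?N. s1 a a' * X a') + (\<Sum>a'<?N. s1 a a' * (pp n a' * X a'))
        = (\<Sum>a'<?N. (s1 a a' * (pp n a' + pp n a)) * X a')"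
      by (simp add: sum_distrib_left sum.distrib[symmetric] algebra_simps)
    also have "\<dots> = 0" by (rule sum.neutral) (use odd_pp[OF s1odd ab(1)] in auto)
    finally show ?thesis .
  qed
  have "Dop n d1 d2 (\<lambda>a b. \<Sum>a'<2*n. s1 a a' * F a' b) a b
       + (\<Sum>a'<2*n. s1 a a' * Dop n d1 d2 F a' b)
       = (\<Sum>a'<?N. d1 a a' * (\<Sum>a''<?N. s1 a' a'' * F a'' b))
       + (\<Sum>a'<?N. s1 a a' * (\<Sum>a''<?N. d1 a' a'' * F a'' b))
       + (pp n a * (\<Sum>b'<?N. d2 b b' * (\<Sum>a'<?N. s1 a a' * F a' b'))
          + (\<Sum>a'<?N. s1 a a' * (pp n a' * X a')))"
    unfolding Dop_def X_def by (simp add: distrib_left sum.distrib algebra_simps)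
  also have "\<dots> = (\<Sum>a'<?N. (mm ?N d1 s1 a a' + mm ?N s1 d1 a a') * F a' b)"
    unfolding A B C using D by (simp add: sum.distrib algebra_simps)
  finally show ?thesis .
qed

lemma DS2:
  fixes d1 d2 s2 :: "nat \<Rightarrow> nat \<Rightarrow> 'a::field"
  assumes d1odd: "\<forall>i<2*n. \<forall>j<2*n. (i<n) = (j<n) \<longrightarrow> d1 i j = 0"
  and ab: "a < 2*n" "b < 2*n"
  shows "Dop n d1 d2 (\<lambda>a b. pp n a * (\<Sum>b'<2*n. s2 b b' * F a b')) a b
       + pp n a * (\<Sum>b'<2*n. s2 b b' * Dop n d1 d2 F a b')
       = (\<Sum>b'<2*n. (mm (2*n) d2 s2 b b' + mm (2*n) s2 d2 b b') * F a b')"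
proof -
  let ?N = "2*n"
  define Y where "Y = (\<lambda>a'. \<Sum>b'<?N. s2 b b' * F a' b')"
  have A: "(\<Sum>b'<?N. d2 b b' * (\<Sum>b''<?N. s2 b' b'' * F a b'')) = (\<Sum>b'<?N. mm ?N d2 s2 b b' * F a b')"
    unfolding sum_nest mm_def ..
  have B: "(\<Sum>b'<?N. s2 b b' * (\<Sum>b''<?N. d2 b' b'' * F a b'')) = (\<Sum>b'<?N. mm ?N s2 d2 b b' * F a b')"
    unfolding sum_nest mm_def ..
  have C: "(\<Sum>b'<?N. s2 b b' * (\<Sum>a'<?N. d1 a a' * F a' b')) = (\<Sum>a'<?N. d1 a a' * Y a')"
    unfolding Y_def by (rule sum_swap2)
  have D: "(\<Sum>a'<?N. d1 a a' * (pp n a' * Y a')) + pp n a * (\<Sum>a'<?N. d1 a a' * Y a') = 0"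
  proof -
    have "(\<Sum>a'<?N. d1 a a' * (pp n a' * Y a')) + pp n a * (\<Sum>a'<?N. d1 a a' * Y a')
        = (\<Sum>a'<?N. (d1 a a' * (pp n a' + pp n a)) * Y a')"
      by (simp add: sum_distrib_left sum.distrib[symmetric] algebra_simps)
    also have "\<dots> = 0" by (rule sum.neutral) (use odd_pp[OF d1odd ab(1)] in auto)
    finally show ?thesis .
  qed
  have "Dop n d1 d2 (\<lambda>a b. pp n a * (\<Sum>b'<2*n. s2 b b' * F a b')) a b
       + pp n a * (\<Sum>b'<2*n. s2 b b' * Dop n d1 d2 F a b')
       = ((\<Sum>a'<?N. d1 a a' * (pp n a' * Y a')) + pp n a * (\<Sum>b'<?N. s2 b b' * (\<Sum>a'<?N. d1 a a' * F a' b')))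
       + (pp n a * pp n a) * ((\<Sum>b'<?N. d2 b b' * (\<Sum>b''<?N. s2 b' b'' * F a b''))
          + (\<Sum>b'<?N. s2 b b' * (\<Sum>b''<?N. d2 b' b'' * F a b'')))"
    unfolding Dop_def Y_def by (simp add: distrib_left sum.distrib sum_distrib_left algebra_simps)
  also have "\<dots> = (\<Sum>b'<?N. (mm ?N d2 s2 b b' + mm ?N s2 d2 b b') * F a b')"
    unfolding A B C using D by (simp add: pp_sq sum.distrib algebra_simps)
  finally show ?thesis .
qed


lemma Dop_add: "Dop n d1 d2 (\<lambda>a b. F a b + K a b) a b = Dop n d1 d2 F a b + Dop n d1 d2 K a b"
  unfolding Dop_def by (simp add: sum.distrib algebra_simps)

lemma Dop_diff: "Dop n d1 d2 (\<lambda>a b. F a b - K a b) a b = Dop n d1 d2 F a b - Dop n d1 d2 K a b"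
  unfolding Dop_def by (simp add: sum_subtractf algebra_simps)

lemma sum_M_support:
  fixes M :: "nat \<Rightarrow> nat \<Rightarrow> 'a::comm_ring_1"
  assumes "i < N" 
  and "\<forall>r<N. r \<in> R \<longrightarrow> M i r = (if i = r then 1 else 0)"
  and "\<forall>r<N. r \<notin> R \<longrightarrow> f r = 0"
  shows "(\<Sum>r<N. M i r * f r) = f i"
proof -
  have "(\<Sum>r<N. M i r * f r) = (\<Sum>r<N. if i = r then f r else 0)"
    by (rule sum.cong) (use assms in auto)
  then show ?thesis using assms(1) by simp
qed

lemma main_fun:
  fixes d1 d2 s1 s2 H :: "nat \<Rightarrow> nat \<Rightarrow> 'a::field"
  assumes d1sq: "\<forall>i<2*n. \<forall>j<2*n. mm (2*n) d1 d1 i j = 0"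
  and d2sq: "\<forall>i<2*n. \<forall>j<2*n. mm (2*n) d2 d2 i j = 0"
  and d1odd: "\<forall>i<2*n. \<forall>j<2*n. (i<n) = (j<n) \<longrightarrow> d1 i j = 0"
  and s1odd: "\<forall>i<2*n. \<forall>j<2*n. (i<n) = (j<n) \<longrightarrow> s1 i j = 0"
  and M1: "\<forall>r<2*n. r \<in> R \<longrightarrow> (\<forall>i<2*n. mm (2*n) d1 s1 i r + mm (2*n) s1 d1 i r = (if i = r then 1 else 0))"
  and M2: "\<forall>r<2*n. r \<in> R \<longrightarrow> (\<forall>i<2*n. mm (2*n) d2 s2 i r + mm (2*n) s2 d2 i r = (if i = r then 1 else 0))"
  and HD: "\<forall>a<2*n. \<forall>b<2*n. Dop n d1 d2 H a b = 0"
  and HS: "\<forall>a<2*n. \<forall>b<2*n. a \<notin> R \<longrightarrow> b \<notin> R \<longrightarrow> H a b = 0"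
  shows "\<exists>G. \<forall>a<2*n. \<forall>b<2*n. H a b = Dop n d1 d2 G a b"
proof -
  let ?N = "2*n"
  define S1H where "S1H = (\<lambda>a b. \<Sum>a'<?N. s1 a a' * H a' b)"
  define H' where "H' = (\<lambda>a b. H a b - Dop n d1 d2 S1H a b)"
  define S2H' where "S2H' = (\<lambda>a b. pp n a * (\<Sum>b'<?N. s2 b b' * H' a b'))"
  have H'eq: "H' a b = H a b - (\<Sum>a'<?N. (mm ?N d1 s1 a a' + mm ?N s1 d1 a a') * H a' b)"
    if ab: "a < ?N" "b < ?N" for a b
  proof -
    have "(\<Sum>a'<?N. s1 a a' * Dop n d1 d2 H a' b) = 0"
      by (rule sum.neutral) (use HD ab in auto)
    then show ?thesis using DS1[OF s1odd ab, of d1 d2 H] unfolding H'_def S1H_def by simp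
  qed
  have H'0: "\<forall>a<?N. \<forall>b<?N. b \<notin> R \<longrightarrow> H' a b = 0"
  proof (intro allI impI)
    fix a b assume ab: "a < ?N" "b < ?N" "b \<notin> R"
    have "(\<Sum>a'<?N. (mm ?N d1 s1 a a' + mm ?N s1 d1 a a') * H a' b) = H a b"
      by (rule sum_M_support[where R=R]) (use ab M1 HS in auto)
    then show "H' a b = 0" using H'eq ab by simp
  qed
  have DH': "Dop n d1 d2 H' a b = 0" if ab: "a < ?N" "b < ?N" for a b
    unfolding H'_def using Dop_diff[of n d1 d2 H "Dop n d1 d2 S1H" a b] HD ab
      DD[OF d1sq d2sq d1odd ab, of S1H] by simp
  have DS2H: "Dop n d1 d2 S2H' a b = H' a b" if ab: "a < ?N" "b < ?N" for a b
  proof -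
    have "(\<Sum>b'<?N. s2 b b' * Dop n d1 d2 H' a b') = 0"
      by (rule sum.neutral) (use DH' ab in auto)
    moreover have "(\<Sum>b'<?N. (mm ?N d2 s2 b b' + mm ?N s2 d2 b b') * H' a b') = H' a b"
      by (rule sum_M_support[where R=R]) (use ab M2 H'0 in auto)
    ultimately show ?thesis using DS2[OF d1odd ab, of d2 s2 H'] unfolding S2H'_def by simp
  qed
  have "H a b = Dop n d1 d2 (\<lambda>a b. S1H a b + S2H' a b) a b" if ab: "a < ?N" "b < ?N" for a b
    using Dop_add[of n d1 d2 S1H S2H' a b] DS2H[OF ab] unfolding H'_def by simp
  then show ?thesis by blast
qed


lemma sum_prod_reindex: "(\<Sum>j<N*M. f j) = (\<Sum>a<N. \<Sum>b<(M::nat). f (a*M+b))"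
proof (induction N)
  case 0 then show ?case by simp
next
  case (Suc N)
  have "(\<Sum>j<Suc N * M. f j) = (\<Sum>j<N*M + M. f j)" by (simp add: add.commute)
  also have "\<dots> = (\<Sum>j<N*M. f j) + (\<Sum>b<M. f (N*M+b))" by (rule sum_split_add)
  finally show ?case using Suc by simp
qed

lemma idx_bound: "a < N \<Longrightarrow> b < N \<Longrightarrow> a*N+b < N*(N::nat)"
proof -
  assume "a < N" "b < N"
  then have "a*N + b < a*N + N" by simp
  also have "\<dots> = (a+1)*N" by simp
  also have "\<dots> \<le> N*N" using \<open>a<N\<close> by (intro mult_le_mono1) simp
  finally show ?thesis .
qed

lemma idx_div: "b < N \<Longrightarrow> (a*N+b) div N = (a::nat)" by simp
lemma idx_mod: "b < N \<Longrightarrow> (a*N+b) mod N = (b::nat)" by simp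

lemma grading_entry:
  "i < 2*n \<Longrightarrow> j < 2*n \<Longrightarrow> (grading n :: 'a::ring_1 mat) $$ (i,j) = (if i = j then pp n i else 0)"
  unfolding grading_def pp_def by (auto simp: mult_2)

lemma grading_dim[simp]: "dim_row (grading n :: 'a::ring_1 mat) = 2*n" "dim_col (grading n :: 'a::ring_1 mat) = 2*n"
  unfolding grading_def by (auto simp: mult_2)

lemma mat_mult_entry:
  assumes "A \<in> carrier_mat N K" "B \<in> carrier_mat K M" "i < N" "j < M"
  shows "(A * B) $$ (i,j) = (\<Sum>k<K. A $$ (i,k) * B $$ (k,j))"
  using assms by (simp add: scalar_prod_def atLeast0LessThan)

lemma mat_vec_entry:
  assumes "A \<in> carrier_mat N K" "v \<in> carrier_vec K" "i < N"
  shows "(A *\<^sub>v v) $ i = (\<Sum>k<K. A $$ (i,k) * v $ k)"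
  using assms by (simp add: scalar_prod_def atLeast0LessThan)

lemma compat_facts:
  fixes \<delta> :: "'a::field mat"
  assumes c: "compatible_boundary n \<delta>" and two: "(2::'a) \<noteq> 0"
  shows "\<delta> \<in> carrier_mat (2*n) (2*n)"
    and "\<forall>i<2*n. \<forall>j<2*n. mm (2*n) (\<lambda>i j. \<delta> $$ (i,j)) (\<lambda>i j. \<delta> $$ (i,j)) i j = 0"
    and "\<forall>i<2*n. \<forall>j<2*n. mm (2*n) (\<lambda>i j. \<delta> $$ (j,i)) (\<lambda>i j. \<delta> $$ (j,i)) i j = 0"
    and "\<forall>i<2*n. \<forall>j<2*n. (i<n) = (j<n) \<longrightarrow> \<delta> $$ (i,j) = 0"
proof -
  let ?N = "2*n"
  show dc: "\<delta> \<in> carrier_mat ?N ?N" using c[unfolded compatible_boundary_def] by blast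
  have sq: "\<delta> * \<delta> = 0\<^sub>m ?N ?N" using c[unfolded compatible_boundary_def] by blast
  have sqe: "(\<Sum>k<?N. \<delta> $$ (i,k) * \<delta> $$ (k,j)) = 0" if "i < ?N" "j < ?N" for i j
    using arg_cong[OF sq, of "\<lambda>M. M $$ (i,j)"] mat_mult_entry[OF dc dc that] that by simp
  show "\<forall>i<2*n. \<forall>j<2*n. mm (2*n) (\<lambda>i j. \<delta> $$ (i,j)) (\<lambda>i j. \<delta> $$ (i,j)) i j = 0"
    using sqe unfolding mm_def by simp
  show "\<forall>i<2*n. \<forall>j<2*n. mm (2*n) (\<lambda>i j. \<delta> $$ (j,i)) (\<lambda>i j. \<delta> $$ (j,i)) i j = 0"
    using sqe unfolding mm_def by (simp add: mult.commute)
  have ac: "\<delta> * grading n + grading n * \<delta> = 0\<^sub>m ?N ?N" using c[unfolded compatible_boundary_def] by blast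
  have gc: "(grading n :: 'a mat) \<in> carrier_mat ?N ?N" by (rule carrier_matI) simp_all
  show "\<forall>i<2*n. \<forall>j<2*n. (i<n) = (j<n) \<longrightarrow> \<delta> $$ (i,j) = 0"
  proof (intro allI impI)
    fix i j assume ij: "i < ?N" "j < ?N" "(i<n) = (j<n)"
    have e1: "(\<delta> * grading n) $$ (i,j) = \<delta> $$ (i,j) * pp n j"
    proof -
      have "(\<delta> * grading n) $$ (i,j) = (\<Sum>k<?N. \<delta> $$ (i,k) * (grading n :: 'a mat) $$ (k,j))"
        by (rule mat_mult_entry[OF dc gc ij(1,2)])
      also have "\<dots> = (\<Sum>k<?N. if k = j then \<delta> $$ (i,k) * pp n j else 0)"
        by (rule sum.cong) (use ij in \<open>auto simp: grading_entry\<close>)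
      finally show ?thesis using ij by simp
    qed
    have e2: "(grading n * \<delta>) $$ (i,j) = pp n i * \<delta> $$ (i,j)"
    proof -
      have "(grading n * \<delta>) $$ (i,j) = (\<Sum>k<?N. (grading n :: 'a mat) $$ (i,k) * \<delta> $$ (k,j))"
        by (rule mat_mult_entry[OF gc dc ij(1,2)])
      also have "\<dots> = (\<Sum>k<?N. if i = k then pp n i * \<delta> $$ (k,j) else 0)"
        by (rule sum.cong) (use ij in \<open>auto simp: grading_entry\<close>)
      finally show ?thesis using ij by simp
    qed
    have "(\<delta> * grading n + grading n * \<delta>) $$ (i,j) = (0\<^sub>m ?N ?N :: 'a mat) $$ (i,j)" by (simp only: ac)
    also have "\<dots> = 0" using ij by simp
    finally have z: "(\<delta> * grading n + grading n * \<delta>) $$ (i,j) = 0" .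
    have dgd: "dim_row (grading n * \<delta>) = ?N" "dim_col (grading n * \<delta>) = ?N" using dc by auto
    have "(\<delta> * grading n + grading n * \<delta>) $$ (i,j) = (\<delta> * grading n) $$ (i,j) + (grading n * \<delta>) $$ (i,j)"
      by (rule index_add_mat(1)) (use ij dgd in auto)
    then have "\<delta> $$ (i,j) * pp n j + pp n i * \<delta> $$ (i,j) = 0"
      using z unfolding e1 e2 by simp
    then have "2 * (pp n i * \<delta> $$ (i,j)) = 0" using ij(3) unfolding pp_def by (auto simp: algebra_simps)
    then show "\<delta> $$ (i,j) = 0" using two unfolding pp_def by (auto split: if_splits)
  qed
qed


lemma kron_entry:
  assumes "A \<in> carrier_mat N N" "B \<in> carrier_mat N N" "a < N" "b < N" "a' < N" "b' < N"
  shows "kron_mat A B $$ (a*N+b, a'*N+b') = A $$ (a,a') * B $$ (b,b')"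
    "dim_row (kron_mat A B) = N*N" "dim_col (kron_mat A B) = N*N"
proof -
  have i: "a*N+b < N*N" "a'*N+b' < N*N" using assms idx_bound by auto
  have dims: "dim_row A = N" "dim_col A = N" "dim_row B = N" "dim_col B = N" using assms by auto
  show "kron_mat A B $$ (a*N+b, a'*N+b') = A $$ (a,a') * B $$ (b,b')"
    unfolding kron_mat_def dims using i assms(3-6) by (simp add: idx_div idx_mod)
  show "dim_row (kron_mat A B) = N*N" "dim_col (kron_mat A B) = N*N"
    unfolding kron_mat_def dims by simp_all
qed

lemma pb_entry:
  fixes \<delta>1 \<delta>2 :: "'a::ring_1 mat"
  assumes d: "\<delta>1 \<in> carrier_mat (2*n) (2*n)" "\<delta>2 \<in> carrier_mat (2*n) (2*n)"
  and ab: "a < 2*n" "b < 2*n" "a' < 2*n" "b' < 2*n"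
  shows "prod_boundary n \<delta>1 \<delta>2 $$ (a*(2*n)+b, a'*(2*n)+b')
     = \<delta>1 $$ (a,a') * (if b = b' then 1 else 0) + (if a = a' then pp n a else 0) * \<delta>2 $$ (b,b')"
    "dim_row (prod_boundary n \<delta>1 \<delta>2) = 2*n*(2*n)" "dim_col (prod_boundary n \<delta>1 \<delta>2) = 2*n*(2*n)"
proof -
  have gc: "(grading n :: 'a mat) \<in> carrier_mat (2*n) (2*n)" by (rule carrier_matI) simp_all
  have oc: "(1\<^sub>m (2*n) :: 'a mat) \<in> carrier_mat (2*n) (2*n)" by simp
  note k1 = kron_entry[OF d(1) oc ab] and k2 = kron_entry[OF gc d(2) ab]
  have i: "a*(2*n)+b < 2*n*(2*n)" "a'*(2*n)+b' < 2*n*(2*n)"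
    using idx_bound[OF ab(1,2)] idx_bound[OF ab(3,4)] by simp_all
  have "prod_boundary n \<delta>1 \<delta>2 $$ (a*(2*n)+b, a'*(2*n)+b') =
      kron_mat \<delta>1 (1\<^sub>m (2*n)) $$ (a*(2*n)+b, a'*(2*n)+b') + kron_mat (grading n) \<delta>2 $$ (a*(2*n)+b, a'*(2*n)+b')"
    unfolding prod_boundary_def by (rule index_add_mat(1)) (use i k2 in simp_all)
  also have "\<dots> = \<delta>1 $$ (a,a') * (if b = b' then 1 else 0) + (if a = a' then pp n a else 0) * \<delta>2 $$ (b,b')"
    unfolding k1 k2 using ab by (simp add: grading_entry)
  finally show "prod_boundary n \<delta>1 \<delta>2 $$ (a*(2*n)+b, a'*(2*n)+b')
     = \<delta>1 $$ (a,a') * (if b = b' then 1 else 0) + (if a = a' then pp n a else 0) * \<delta>2 $$ (b,b')" .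
  show "dim_row (prod_boundary n \<delta>1 \<delta>2) = 2*n*(2*n)" "dim_col (prod_boundary n \<delta>1 \<delta>2) = 2*n*(2*n)"
    unfolding prod_boundary_def using k2 by simp_all
qed

lemma mv_Dop:
  fixes E :: "'a::comm_ring_1 mat"
  assumes E: "E \<in> carrier_mat (2*n*(2*n)) (2*n*(2*n))"
  and ent: "\<forall>a<2*n. \<forall>b<2*n. \<forall>a'<2*n. \<forall>b'<2*n. E $$ (a*(2*n)+b, a'*(2*n)+b')
      = d1 a a' * (if b = b' then 1 else 0) + (if a = a' then pp n a else 0) * d2 b b'"
  and x: "x \<in> carrier_vec (2*n*(2*n))"
  and ab: "a < 2*n" "b < 2*n"
  shows "(E *\<^sub>v x) $ (a*(2*n)+b) = Dop n d1 d2 (\<lambda>a b. x $ (a*(2*n)+b)) a b"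
proof -
  let ?N = "2*n"
  define X where "X = (\<lambda>a b. x $ (a*?N+b))"
  have i: "a*?N+b < ?N*?N" by (rule idx_bound[OF ab])
  have "(E *\<^sub>v x) $ (a*?N+b) = (\<Sum>j<?N*?N. E $$ (a*?N+b, j) * x $ j)"
    by (rule mat_vec_entry[OF E x i])
  also have "\<dots> = (\<Sum>a'<?N. \<Sum>b'<?N. E $$ (a*?N+b, a'*?N+b') * X a' b')"
    unfolding X_def by (rule sum_prod_reindex)
  also have "\<dots> = (\<Sum>a'<?N. \<Sum>b'<?N. d1 a a' * (if b = b' then 1 else 0) * X a' b'
                    + (if a = a' then pp n a else 0) * (d2 b b' * X a' b'))"
    by (intro sum.cong refl) (use ent ab in \<open>simp add: algebra_simps\<close>)
  also have "\<dots> = (\<Sum>a'<?N. \<Sum>b'<?N. d1 a a' * (if b = b' then 1 else 0) * X a' b')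
                 + (\<Sum>a'<?N. (if a = a' then pp n a else 0) * (\<Sum>b'<?N. d2 b b' * X a' b'))"
    by (simp add: sum.distrib sum_distrib_left)
  also have "(\<Sum>a'<?N. \<Sum>b'<?N. d1 a a' * (if b = b' then 1 else 0) * X a' b') = (\<Sum>a'<?N. d1 a a' * X a' b)"
  proof (rule sum.cong[OF refl])
    fix a' assume "a' \<in> {..<?N}"
    have "(\<Sum>b'<?N. d1 a a' * (if b = b' then 1 else 0) * X a' b') = (\<Sum>b'<?N. if b = b' then d1 a a' * X a' b' else 0)"
      by (rule sum.cong) auto
    then show "(\<Sum>b'<?N. d1 a a' * (if b = b' then 1 else 0) * X a' b') = d1 a a' * X a' b" using ab by simp
  qed
  also have "(\<Sum>a'<?N. (if a = a' then pp n a else 0) * (\<Sum>b'<?N. d2 b b' * X a' b'))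
           = pp n a * (\<Sum>b'<?N. d2 b b' * X a b')"
  proof -
    have "(\<Sum>a'<?N. (if a = a' then pp n a else 0) * (\<Sum>b'<?N. d2 b b' * X a' b'))
        = (\<Sum>a'<?N. if a = a' then pp n a * (\<Sum>b'<?N. d2 b b' * X a' b') else 0)"
      by (rule sum.cong) auto
    then show ?thesis using ab by simp
  qed
  finally show ?thesis unfolding Dop_def X_def .
qed


lemma dist_contra:
  assumes "enat (2*(n-n')+1) \<le> css_distance Hz Hx"
  and "v \<in> (mat_kernel Hx - mat_image Hz) \<union> (mat_kernel (transpose_mat Hz) - mat_image (transpose_mat Hx))"
  and "hweight v \<le> n - n'"
  shows False
proof -
  have "css_distance Hz Hx \<le> enat (hweight v)"
    unfolding css_distance_def by (rule INF_lower[OF assms(2)])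
  then have "enat (2*(n-n')+1) \<le> enat (n - n')" using assms(1,3) order_trans by fastforce
  then show False by simp
qed

lemma hw_bound: "(\<forall>i<n. i<n' \<longrightarrow> u i = 0) \<Longrightarrow> hweight (vec n u) \<le> n - n'"
proof -
  assume h: "\<forall>i<n. i<n' \<longrightarrow> u i = 0"
  have "{i. i < dim_vec (vec n u) \<and> vec n u $ i \<noteq> 0} \<subseteq> {n'..<n}" using h by auto
  then have "card {i. i < dim_vec (vec n u) \<and> vec n u $ i \<noteq> 0} \<le> card {n'..<n}"
    by (intro card_mono) auto
  then show ?thesis unfolding hweight_def by simp
qed

lemma ker_vec: assumes "M \<in> carrier_mat n n"
  shows "(\<forall>i<n. (\<Sum>j<n. M $$ (i,j) * u j) = 0) \<Longrightarrow> vec n u \<in> mat_kernel M"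
proof -
  assume h: "\<forall>i<n. (\<Sum>j<n. M $$ (i,j) * u j) = 0"
  have "M *\<^sub>v vec n u = 0\<^sub>v n"
  proof (rule eq_vecI)
    fix i assume "i < dim_vec (0\<^sub>v n :: 'a vec)"
    then have i: "i < n" by simp
    have "(M *\<^sub>v vec n u) $ i = (\<Sum>j<n. M $$ (i,j) * vec n u $ j)"
      by (rule mat_vec_entry[OF assms _ i]) simp
    also have "\<dots> = (\<Sum>j<n. M $$ (i,j) * u j)" by (rule sum.cong) auto
    finally show "(M *\<^sub>v vec n u) $ i = 0\<^sub>v n $ i" using h i by simp
  qed (use assms in simp)
  then show ?thesis unfolding mat_kernel_def using assms by auto
qed

lemma im_vec: assumes "M \<in> carrier_mat n n" "vec n u \<in> mat_image M"
  shows "\<exists>x. \<forall>i<n. u i = (\<Sum>j<n. M $$ (i,j) * x j)"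
proof -
  obtain y where y: "y \<in> carrier_vec n" "vec n u = M *\<^sub>v y"
    using assms unfolding mat_image_def by auto
  have "u i = (\<Sum>j<n. M $$ (i,j) * y $ j)" if i: "i < n" for i
  proof -
    have "u i = vec n u $ i" using i by simp
    also have "\<dots> = (\<Sum>j<n. M $$ (i,j) * y $ j)" unfolding y(2) by (rule mat_vec_entry[OF assms(1) y(1) i])
    finally show ?thesis .
  qed
  then show ?thesis by blast
qed

lemma use_dist:
  fixes Hz Hx :: "'a::comm_ring_1 mat"
  assumes dist: "enat (2*(n-n')+1) \<le> css_distance Hz Hx"
  and c: "Hz \<in> carrier_mat n n" "Hx \<in> carrier_mat n n"
  shows "\<forall>u. (\<forall>i<n. i<n' \<longrightarrow> u i = 0) \<longrightarrow> (\<forall>i<n. (\<Sum>j<n. Hx $$ (i,j) * u j) = 0)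
            \<longrightarrow> (\<exists>x. \<forall>i<n. u i = (\<Sum>j<n. Hz $$ (i,j) * x j))"
    and "\<forall>u. (\<forall>i<n. i<n' \<longrightarrow> u i = 0) \<longrightarrow> (\<forall>i<n. (\<Sum>j<n. Hz $$ (j,i) * u j) = 0)
            \<longrightarrow> (\<exists>x. \<forall>i<n. u i = (\<Sum>j<n. Hx $$ (j,i) * x j))"
proof -
  show "\<forall>u. (\<forall>i<n. i<n' \<longrightarrow> u i = 0) \<longrightarrow> (\<forall>i<n. (\<Sum>j<n. Hx $$ (i,j) * u j) = 0)
            \<longrightarrow> (\<exists>x. \<forall>i<n. u i = (\<Sum>j<n. Hz $$ (i,j) * x j))"
  proof (intro allI impI)
  fix u assume s: "\<forall>i<n. i<n' \<longrightarrow> u i = 0" and k: "\<forall>i<n. (\<Sum>j<n. Hx $$ (i,j) * u j) = 0"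
  have "vec n u \<in> mat_kernel Hx" by (rule ker_vec[OF c(2) k])
  moreover have "hweight (vec n u) \<le> n - n'" by (rule hw_bound[OF s])
  ultimately have "vec n u \<in> mat_image Hz" using dist_contra[OF dist, of "vec n u"] by blast
  then show "\<exists>x. \<forall>i<n. u i = (\<Sum>j<n. Hz $$ (i,j) * x j)" by (rule im_vec[OF c(1)])
  qed
  show "\<forall>u. (\<forall>i<n. i<n' \<longrightarrow> u i = 0) \<longrightarrow> (\<forall>i<n. (\<Sum>j<n. Hz $$ (j,i) * u j) = 0)
            \<longrightarrow> (\<exists>x. \<forall>i<n. u i = (\<Sum>j<n. Hx $$ (j,i) * x j))"
  proof (intro allI impI)
  fix u assume s: "\<forall>i<n. i<n' \<longrightarrow> u i = 0" and k: "\<forall>i<n. (\<Sum>j<n. Hz $$ (j,i) * u j) = 0"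
  have ct: "transpose_mat Hz \<in> carrier_mat n n" "transpose_mat Hx \<in> carrier_mat n n" using c by auto
  have "\<forall>i<n. (\<Sum>j<n. transpose_mat Hz $$ (i,j) * u j) = 0" using k c by simp
  then have "vec n u \<in> mat_kernel (transpose_mat Hz)" by (rule ker_vec[OF ct(1)])
  moreover have "hweight (vec n u) \<le> n - n'" by (rule hw_bound[OF s])
  ultimately have "vec n u \<in> mat_image (transpose_mat Hx)" using dist_contra[OF dist, of "vec n u"] by blast
  then obtain x where "\<forall>i<n. u i = (\<Sum>j<n. transpose_mat Hx $$ (i,j) * x j)" using im_vec[OF ct(2)] by blast
  then show "\<exists>x. \<forall>i<n. u i = (\<Sum>j<n. Hx $$ (j,i) * x j)" using c by auto
  qed
qed


lemma pm_entry: "i < n \<Longrightarrow> j < n \<Longrightarrow> delta_pm n \<delta> $$ (i,j) = \<delta> $$ (i, n+j)"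
  unfolding delta_pm_def by simp
lemma mp_entry: "i < n \<Longrightarrow> j < n \<Longrightarrow> delta_mp n \<delta> $$ (i,j) = \<delta> $$ (n+i, j)"
  unfolding delta_mp_def by simp
lemma pm_carrier: "delta_pm n \<delta> \<in> carrier_mat n n" unfolding delta_pm_def by simp
lemma mp_carrier: "delta_mp n \<delta> \<in> carrier_mat n n" unfolding delta_mp_def by simp

lemma dist_blocks:
  fixes \<delta> :: "'a::comm_ring_1 mat"
  assumes P: "enat (2*(n-n')+1) \<le> css_dist_P n \<delta>" and NP: "enat (2*(n-n')+1) \<le> css_dist_negP n \<delta>"
  shows "\<forall>u. (\<forall>i<n. i<n' \<longrightarrow> u i = 0) \<longrightarrow> (\<forall>i<n. (\<Sum>j<n. \<delta> $$ (n+i, j) * u j) = 0)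
            \<longrightarrow> (\<exists>x. \<forall>i<n. u i = (\<Sum>j<n. \<delta> $$ (i, n+j) * x j))"
    and "\<forall>u. (\<forall>i<n. i<n' \<longrightarrow> u i = 0) \<longrightarrow> (\<forall>i<n. (\<Sum>j<n. \<delta> $$ (i, n+j) * u j) = 0)
            \<longrightarrow> (\<exists>x. \<forall>i<n. u i = (\<Sum>j<n. \<delta> $$ (n+i, j) * x j))"
    and "\<forall>u. (\<forall>i<n. i<n' \<longrightarrow> u i = 0) \<longrightarrow> (\<forall>i<n. (\<Sum>j<n. \<delta> $$ (j, n+i) * u j) = 0)
            \<longrightarrow> (\<exists>x. \<forall>i<n. u i = (\<Sum>j<n. \<delta> $$ (n+j, i) * x j))"
    and "\<forall>u. (\<forall>i<n. i<n' \<longrightarrow> u i = 0) \<longrightarrow> (\<forall>i<n. (\<Sum>j<n. \<delta> $$ (n+j, i) * u j) = 0)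
            \<longrightarrow> (\<exists>x. \<forall>i<n. u i = (\<Sum>j<n. \<delta> $$ (j, n+i) * x j))"
proof -
  note A = use_dist[OF P[unfolded css_dist_P_def] pm_carrier mp_carrier]
  note B = use_dist[OF NP[unfolded css_dist_negP_def] mp_carrier pm_carrier]
  have e: "\<And>f i. i < n \<Longrightarrow> (\<Sum>j<n. delta_pm n \<delta> $$ (i,j) * f j) = (\<Sum>j<n. \<delta> $$ (i, n+j) * f j)"
          "\<And>f i. i < n \<Longrightarrow> (\<Sum>j<n. delta_mp n \<delta> $$ (i,j) * f j) = (\<Sum>j<n. \<delta> $$ (n+i, j) * f j)"
          "\<And>f i. i < n \<Longrightarrow> (\<Sum>j<n. delta_pm n \<delta> $$ (j,i) * f j) = (\<Sum>j<n. \<delta> $$ (j, n+i) * f j)"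
          "\<And>f i. i < n \<Longrightarrow> (\<Sum>j<n. delta_mp n \<delta> $$ (j,i) * f j) = (\<Sum>j<n. \<delta> $$ (n+j, i) * f j)"
    by (auto intro!: sum.cong simp: pm_entry mp_entry)
  show "\<forall>u. (\<forall>i<n. i<n' \<longrightarrow> u i = 0) \<longrightarrow> (\<forall>i<n. (\<Sum>j<n. \<delta> $$ (n+i, j) * u j) = 0)
            \<longrightarrow> (\<exists>x. \<forall>i<n. u i = (\<Sum>j<n. \<delta> $$ (i, n+j) * x j))"
    using A(1) by (simp add: e)
  show "\<forall>u. (\<forall>i<n. i<n' \<longrightarrow> u i = 0) \<longrightarrow> (\<forall>i<n. (\<Sum>j<n. \<delta> $$ (i, n+j) * u j) = 0)
            \<longrightarrow> (\<exists>x. \<forall>i<n. u i = (\<Sum>j<n. \<delta> $$ (n+i, j) * x j))"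
    using B(1) by (simp add: e)
  show "\<forall>u. (\<forall>i<n. i<n' \<longrightarrow> u i = 0) \<longrightarrow> (\<forall>i<n. (\<Sum>j<n. \<delta> $$ (j, n+i) * u j) = 0)
            \<longrightarrow> (\<exists>x. \<forall>i<n. u i = (\<Sum>j<n. \<delta> $$ (n+j, i) * x j))"
    using A(2) by (simp add: e)
  show "\<forall>u. (\<forall>i<n. i<n' \<longrightarrow> u i = 0) \<longrightarrow> (\<forall>i<n. (\<Sum>j<n. \<delta> $$ (n+j, i) * u j) = 0)
            \<longrightarrow> (\<exists>x. \<forall>i<n. u i = (\<Sum>j<n. \<delta> $$ (j, n+i) * x j))"
    using B(2) by (simp add: e)
qed


lemma Dop_cong: "(\<forall>a'<2*n. \<forall>b'<2*n. F a' b' = K a' b') \<Longrightarrow> a < 2*n \<Longrightarrow> b < 2*n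
   \<Longrightarrow> Dop n d1 d2 F a b = Dop n d1 d2 K a b"
  unfolding Dop_def by (auto intro!: sum.cong arg_cong2[where f="(+)"])

lemma final_part:
  fixes E :: "'a::field mat" and d1 d2 :: "nat \<Rightarrow> nat \<Rightarrow> 'a"
  assumes E: "E \<in> carrier_mat (2*n*(2*n)) (2*n*(2*n))"
  and ent: "\<forall>a<2*n. \<forall>b<2*n. \<forall>a'<2*n. \<forall>b'<2*n. E $$ (a*(2*n)+b, a'*(2*n)+b')
      = d1 a a' * (if b = b' then 1 else 0) + (if a = a' then pp n a else 0) * d2 b b'"
  and d1sq: "\<forall>i<2*n. \<forall>j<2*n. mm (2*n) d1 d1 i j = 0"
  and d2sq: "\<forall>i<2*n. \<forall>j<2*n. mm (2*n) d2 d2 i j = 0"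
  and d1odd: "\<forall>i<2*n. \<forall>j<2*n. (i<n) = (j<n) \<longrightarrow> d1 i j = 0"
  and hyp1: "\<forall>v. (\<forall>i<2*n. (\<Sum>j<2*n. d1 i j * v j) = 0) \<longrightarrow> (\<forall>i<2*n. i \<notin> R \<longrightarrow> v i = 0)
            \<longrightarrow> (\<exists>w. \<forall>i<2*n. v i = (\<Sum>j<2*n. d1 i j * w j))"
  and hyp2: "\<forall>v. (\<forall>i<2*n. (\<Sum>j<2*n. d2 i j * v j) = 0) \<longrightarrow> (\<forall>i<2*n. i \<notin> R \<longrightarrow> v i = 0)
            \<longrightarrow> (\<exists>w. \<forall>i<2*n. v i = (\<Sum>j<2*n. d2 i j * w j))"
  and h: "h \<in> carrier_vec (2*n*(2*n))" "E *\<^sub>v h = 0\<^sub>v (2*n*(2*n))"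
  and HS: "\<forall>a<2*n. \<forall>b<2*n. a \<notin> R \<longrightarrow> b \<notin> R \<longrightarrow> h $ (a*(2*n)+b) = 0"
  shows "h \<in> mat_image E"
proof -
  let ?N = "2*n"
  obtain \<sigma>1 where \<sigma>1: "\<forall>r<?N. r \<in> R \<longrightarrow> (\<forall>i<?N. mm ?N d1 \<sigma>1 i r + mm ?N \<sigma>1 d1 i r = (if i = r then 1 else 0))"
    using clean[OF d1sq hyp1] by blast
  define s1 where "s1 = (\<lambda>a b. if (a<n) = (b<n) then 0 else \<sigma>1 a b)"
  have M1: "\<forall>r<?N. r \<in> R \<longrightarrow> (\<forall>i<?N. mm ?N d1 s1 i r + mm ?N s1 d1 i r = (if i = r then 1 else 0))"
    unfolding s1_def by (rule oddify[OF d1odd \<sigma>1])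
  have s1odd: "\<forall>i<?N. \<forall>j<?N. (i<n) = (j<n) \<longrightarrow> s1 i j = 0" unfolding s1_def by simp
  obtain s2 where M2: "\<forall>r<?N. r \<in> R \<longrightarrow> (\<forall>i<?N. mm ?N d2 s2 i r + mm ?N s2 d2 i r = (if i = r then 1 else 0))"
    using clean[OF d2sq hyp2] by blast
  define H where "H = (\<lambda>a b. h $ (a*?N+b))"
  have HD: "\<forall>a<?N. \<forall>b<?N. Dop n d1 d2 H a b = 0"
  proof (intro allI impI)
    fix a b assume ab: "a < ?N" "b < ?N"
    have "Dop n d1 d2 H a b = (E *\<^sub>v h) $ (a*?N+b)" unfolding H_def
      by (rule mv_Dop[OF E ent h(1) ab, symmetric])
    also have "\<dots> = 0" unfolding h(2) using idx_bound[OF ab] by simp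
    finally show "Dop n d1 d2 H a b = 0" .
  qed
  have HS': "\<forall>a<?N. \<forall>b<?N. a \<notin> R \<longrightarrow> b \<notin> R \<longrightarrow> H a b = 0" using HS unfolding H_def by simp
  obtain G where G: "\<forall>a<?N. \<forall>b<?N. H a b = Dop n d1 d2 G a b"
    using main_fun[OF d1sq d2sq d1odd s1odd M1 M2 HD HS'] by blast
  define x where "x = vec (?N*?N) (\<lambda>i. G (i div ?N) (i mod ?N))"
  have xc: "x \<in> carrier_vec (?N*?N)" unfolding x_def by simp
  have "h = E *\<^sub>v x"
  proof (rule eq_vecI)
    fix i assume "i < dim_vec (E *\<^sub>v x)"
    then have i: "i < ?N*?N" using E by simp
    define a where "a = i div ?N"
    define b where "b = i mod ?N"
    have Np: "0 < ?N" using i by (cases n) auto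
    have ab: "a < ?N" "b < ?N" unfolding a_def b_def
      using less_mult_imp_div_less[OF i] mod_less_divisor[OF Np] by auto
    have ie: "i = a*?N+b" unfolding a_def b_def by (rule div_mult_mod_eq[symmetric])
    have "(E *\<^sub>v x) $ i = Dop n d1 d2 (\<lambda>a b. x $ (a*?N+b)) a b"
      unfolding ie by (rule mv_Dop[OF E ent xc ab])
    also have "\<dots> = Dop n d1 d2 G a b"
    proof (rule Dop_cong[OF _ ab])
      show "\<forall>a'<?N. \<forall>b'<?N. x $ (a'*?N+b') = G a' b'"
      proof (intro allI impI)
        fix a' b' assume ab': "a' < ?N" "b' < ?N"
        have "a'*?N+b' < ?N*?N" by (rule idx_bound[OF ab'])
        then show "x $ (a'*?N+b') = G a' b'" unfolding x_def using ab' by (simp add: idx_div idx_mod)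
      qed
    qed
    also have "\<dots> = H a b" using G ab by simp
    also have "\<dots> = h $ i" unfolding H_def ie ..
    finally show "h $ i = (E *\<^sub>v x) $ i" by simp
  next
    show "dim_vec h = dim_vec (E *\<^sub>v x)" using h E by simp
  qed
  then show ?thesis unfolding mat_image_def using xc E by auto
qed


lemma pbT_entry:
  fixes \<delta>1 \<delta>2 :: "'a::ring_1 mat"
  assumes d: "\<delta>1 \<in> carrier_mat (2*n) (2*n)" "\<delta>2 \<in> carrier_mat (2*n) (2*n)"
  and ab: "a < 2*n" "b < 2*n" "a' < 2*n" "b' < 2*n"
  shows "transpose_mat (prod_boundary n \<delta>1 \<delta>2) $$ (a*(2*n)+b, a'*(2*n)+b')
     = \<delta>1 $$ (a',a) * (if b = b' then 1 else 0) + (if a = a' then pp n a else 0) * \<delta>2 $$ (b',b)"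
proof -
  note e = pb_entry[OF d ab(3,4,1,2)]
  have i: "a*(2*n)+b < 2*n*(2*n)" "a'*(2*n)+b' < 2*n*(2*n)"
    using idx_bound[OF ab(1,2)] idx_bound[OF ab(3,4)] by simp_all
  have "transpose_mat (prod_boundary n \<delta>1 \<delta>2) $$ (a*(2*n)+b, a'*(2*n)+b')
      = prod_boundary n \<delta>1 \<delta>2 $$ (a'*(2*n)+b', a*(2*n)+b)"
    by (rule index_transpose_mat(1)) (use e(2,3) i in simp_all)
  also have "\<dots> = \<delta>1 $$ (a',a) * (if b = b' then 1 else 0) + (if a = a' then pp n a else 0) * \<delta>2 $$ (b',b)"
    unfolding e(1) by auto
  finally show ?thesis .
qed

lemma HS_lemma:
  assumes "in_Cplus n h" "reduced_vanishes n n' h"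
  shows "\<forall>a<2*n. \<forall>b<2*n. a \<notin> Rs n n' \<longrightarrow> b \<notin> Rs n n' \<longrightarrow> h $ (a*(2*n)+b) = 0"
proof (intro allI impI)
  fix a b assume ab: "a < 2*n" "b < 2*n" "a \<notin> Rs n n'" "b \<notin> Rs n n'"
  have a': "a < n \<Longrightarrow> a < n'" "b < n \<Longrightarrow> b < n'" "\<not> a < n \<Longrightarrow> a < n + n'" "\<not> b < n \<Longrightarrow> b < n + n'"
    using ab(3,4) unfolding Rs_def by auto
  show "h $ (a*(2*n)+b) = 0"
  proof (cases "(a<n) = (b<n)")
    case False
    then show ?thesis using assms(1) ab unfolding in_Cplus_def by blast
  next
    case True
    show ?thesis
    proof (cases "a < n")
      case True
      then have "b < n" using \<open>(a<n) = (b<n)\<close> by simp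
      then have "psi_plus n h a b = 0" using assms(2) a' True unfolding reduced_vanishes_def by blast
      then show ?thesis unfolding psi_plus_def .
    next
      case False
      then have bn: "\<not> b < n" using \<open>(a<n) = (b<n)\<close> by simp
      define j where "j = a - n"
      define k where "k = b - n"
      have jk: "j < n'" "k < n'" "a = n + j" "b = n + k" using a'(3,4) False bn unfolding j_def k_def by auto
      then have "psi_minus n h j k = 0" using assms(2) unfolding reduced_vanishes_def by blast
      then show ?thesis unfolding psi_minus_def jk(3,4) .
    qed
  qed
qed

theorem lemma4:
  fixes \<delta>1 \<delta>2 :: "'a::{field, finite} mat" and n n' :: nat
  assumes "prime (card (UNIV :: 'a set))" and "odd (card (UNIV :: 'a set))"
    and "compatible_boundary n \<delta>1" and "compatible_boundary n \<delta>2"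
    and "n' \<le> n"
    and "enat (2 * (n - n') + 1) \<le> css_dist_P n \<delta>1"
    and "enat (2 * (n - n') + 1) \<le> css_dist_negP n \<delta>1"
    and "enat (2 * (n - n') + 1) \<le> css_dist_P n \<delta>2"
    and "enat (2 * (n - n') + 1) \<le> css_dist_negP n \<delta>2"
  shows "(\<forall>h. in_Cplus n h \<and> h \<in> mat_kernel (prod_boundary n \<delta>1 \<delta>2) \<and> reduced_vanishes n n' h
            \<longrightarrow> h \<in> mat_image (prod_boundary n \<delta>1 \<delta>2))
       \<and> (\<forall>h. in_Cplus n h \<and> h \<in> mat_kernel (transpose_mat (prod_boundary n \<delta>1 \<delta>2))
              \<and> reduced_vanishes n n' h
            \<longrightarrow> h \<in> mat_image (transpose_mat (prod_boundary n \<delta>1 \<delta>2)))"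
proof -
  have two: "(2::'a) \<noteq> 0" by (rule two_nz[OF assms(2)])
  note c1 = compat_facts[OF assms(3) two] and c2 = compat_facts[OF assms(4) two]
  note db1 = dist_blocks[OF assms(6) assms(7)] and db2 = dist_blocks[OF assms(8) assms(9)]
  have hyp1: "\<forall>v. (\<forall>i<2*n. (\<Sum>j<2*n. \<delta>1 $$ (i,j) * v j) = 0) \<longrightarrow> (\<forall>i<2*n. i \<notin> Rs n n' \<longrightarrow> v i = 0)
            \<longrightarrow> (\<exists>w. \<forall>i<2*n. v i = (\<Sum>j<2*n. \<delta>1 $$ (i,j) * w j))"
    by (rule hyp_blocks[OF c1(4) db1(1,2)])
  have hyp2: "\<forall>v. (\<forall>i<2*n. (\<Sum>j<2*n. \<delta>2 $$ (i,j) * v j) = 0) \<longrightarrow> (\<forall>i<2*n. i \<notin> Rs n n' \<longrightarrow> v i = 0)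
            \<longrightarrow> (\<exists>w. \<forall>i<2*n. v i = (\<Sum>j<2*n. \<delta>2 $$ (i,j) * w j))"
    by (rule hyp_blocks[OF c2(4) db2(1,2)])
  have oddT1: "\<forall>i<2*n. \<forall>j<2*n. (i<n) = (j<n) \<longrightarrow> \<delta>1 $$ (j,i) = 0"
  proof (intro allI impI)
    fix i j assume "i < 2*n" "j < 2*n" "(i<n) = (j<n)"
    then show "\<delta>1 $$ (j,i) = 0" using c1(4) by simp
  qed
  have oddT2: "\<forall>i<2*n. \<forall>j<2*n. (i<n) = (j<n) \<longrightarrow> \<delta>2 $$ (j,i) = 0"
  proof (intro allI impI)
    fix i j assume "i < 2*n" "j < 2*n" "(i<n) = (j<n)"
    then show "\<delta>2 $$ (j,i) = 0" using c2(4) by simp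
  qed
  have hyp1T: "\<forall>v. (\<forall>i<2*n. (\<Sum>j<2*n. \<delta>1 $$ (j,i) * v j) = 0) \<longrightarrow> (\<forall>i<2*n. i \<notin> Rs n n' \<longrightarrow> v i = 0)
            \<longrightarrow> (\<exists>w. \<forall>i<2*n. v i = (\<Sum>j<2*n. \<delta>1 $$ (j,i) * w j))"
    by (rule hyp_blocks[OF oddT1 db1(3,4)])
  have hyp2T: "\<forall>v. (\<forall>i<2*n. (\<Sum>j<2*n. \<delta>2 $$ (j,i) * v j) = 0) \<longrightarrow> (\<forall>i<2*n. i \<notin> Rs n n' \<longrightarrow> v i = 0)
            \<longrightarrow> (\<exists>w. \<forall>i<2*n. v i = (\<Sum>j<2*n. \<delta>2 $$ (j,i) * w j))"
    by (rule hyp_blocks[OF oddT2 db2(3,4)])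
  let ?E = "prod_boundary n \<delta>1 \<delta>2"
  have dims: "dim_row ?E = 2*n*(2*n)" "dim_col ?E = 2*n*(2*n)"
  proof -
    have "dim_row \<delta>2 = 2*n" "dim_col \<delta>2 = 2*n" using c2(1) by auto
    then show "dim_row ?E = 2*n*(2*n)" "dim_col ?E = 2*n*(2*n)"
      unfolding prod_boundary_def kron_mat_def by (simp_all only: index_add_mat(2,3) dim_row_mat dim_col_mat grading_dim)
  qed
  have Ec: "?E \<in> carrier_mat (2*n*(2*n)) (2*n*(2*n))" by (rule carrier_matI[OF dims])
  have EcT: "transpose_mat ?E \<in> carrier_mat (2*n*(2*n)) (2*n*(2*n))"
    by (rule carrier_matI) (simp_all only: index_transpose_mat(2,3) dims)
  have ent: "\<forall>a<2*n. \<forall>b<2*n. \<forall>a'<2*n. \<forall>b'<2*n. ?E $$ (a*(2*n)+b, a'*(2*n)+b')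
      = \<delta>1 $$ (a,a') * (if b = b' then 1 else 0) + (if a = a' then pp n a else 0) * \<delta>2 $$ (b,b')"
    by (intro allI impI, rule pb_entry(1)[OF c1(1) c2(1)]) assumption+
  have entT: "\<forall>a<2*n. \<forall>b<2*n. \<forall>a'<2*n. \<forall>b'<2*n. transpose_mat ?E $$ (a*(2*n)+b, a'*(2*n)+b')
      = \<delta>1 $$ (a',a) * (if b = b' then 1 else 0) + (if a = a' then pp n a else 0) * \<delta>2 $$ (b',b)"
    by (intro allI impI, rule pbT_entry[OF c1(1) c2(1)]) assumption+
  show ?thesis
  proof (intro conjI allI impI)
    fix h assume hh: "in_Cplus n h \<and> h \<in> mat_kernel ?E \<and> reduced_vanishes n n' h"
    have "h \<in> carrier_vec (dim_col ?E) \<and> ?E *\<^sub>v h = 0\<^sub>v (dim_row ?E)"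
      using hh unfolding mat_kernel_def by blast
    then have hc: "h \<in> carrier_vec (2*n*(2*n))" "?E *\<^sub>v h = 0\<^sub>v (2*n*(2*n))"
      unfolding dims by blast+
    show "h \<in> mat_image ?E"
      by (rule final_part[OF Ec ent c1(2) c2(2) c1(4) hyp1 hyp2 hc HS_lemma]) (use hh in blast)+
  next
    fix h assume hh: "in_Cplus n h \<and> h \<in> mat_kernel (transpose_mat ?E) \<and> reduced_vanishes n n' h"
    have "h \<in> carrier_vec (dim_col (transpose_mat ?E)) \<and> transpose_mat ?E *\<^sub>v h = 0\<^sub>v (dim_row (transpose_mat ?E))"
      using hh unfolding mat_kernel_def by blast
    then have hc: "h \<in> carrier_vec (2*n*(2*n))" "transpose_mat ?E *\<^sub>v h = 0\<^sub>v (2*n*(2*n))"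
      unfolding index_transpose_mat(2,3) dims by blast+
    show "h \<in> mat_image (transpose_mat ?E)"
      by (rule final_part[OF EcT entT c1(3) c2(3) oddT1 hyp1T hyp2T hc HS_lemma]) (use hh in blast)+
  qed
qed

end
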